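(* Let $R$ be a ring with a separated Zariskian filtration $w:R\to\mathbb{Z}\cup\{\infty\}$, with Rees ring $\tilde R$, maps $\rho_1,\rho_2$, Ore sets $T$, $S$, $\tilde S$ and localisation map $\alpha$ as described in the context, and assume $sr\neq0$ for all $s\in S$ and nonzero $r\in R$. Then $\rho_1$ and $\rho_2$ extend to ring homomorphisms $\rho_1:\tilde S^{-1}\tilde R\to S^{-1}R$, $\tilde s^{-1}\tilde r\mapsto\rho_1(\tilde s)^{-1}\rho_1(\tilde r)$, and $\rho_2:\tilde S^{-1}\tilde R\to T^{-1}\mathrm{gr}_w(R)$, $\tilde s^{-1}\tilde r\mapsto \alpha(\rho_2(\tilde s))^{-1}\alpha(\rho_2(\tilde r))$, with kernels $(t-1)\tilde S^{-1}\tilde R$ and $t\tilde S^{-1}\tilde R$ respectively, and $\rho_2$ is graded.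
   Context: The filtration $w$ is descending with level sets $F_nR=\{r:w(r)\geq n\}$ and $\mathrm{gr}_w(R)=\bigoplus_nF_nR/F_{n+1}R$; for $r\ne0$, $\mathrm{gr}(r)=r+F_{w(r)+1}R$. The Rees ring is the graded ring $\tilde R=\bigoplus_{n\in\mathbb{Z}}F_nR\cdot t^{-n}$ with $(at^{-n})(bt^{-m})=abt^{-(n+m)}$, the element $rt^{-n}$ ($r\in F_nR$) having degree $n$; $t=1\cdot t^{1}$ is a central element of degree $-1$. Zariskian means $\tilde R$ is Noetherian and $F_1R$ is contained in the Jacobson radical of $F_0R$. $\rho_1:\tilde R\to R$ is the ring homomorphism $\sum r_nt^{-n}\mapsto\sum r_n$ and $\rho_2:\tilde R\to\mathrm{gr}_w(R)$ the graded homomorphism $rt^{-n}\mapsto r+F_{n+1}R$. $T$ is a multiplicatively closed, left Ore set of homogeneous elements of $\mathrm{gr}_w(R)$, $\alpha:\mathrm{gr}_w(R)\to T^{-1}\mathrm{gr}_w(R)$ the localisation map, $S=\{r\in R:\mathrm{gr}(r)\in T\}$ and $\tilde S=\{s\in\tilde R: s\text{ homogeneous},\ \rho_2(s)\in T\}$; $S$ and $\tilde S$ are left Ore sets in $R$ and $\tilde R$. Under the stated assumption $R\subseteq S^{-1}R$ and $\tilde R\subseteq\tilde S^{-1}\tilde R$, and $\tilde S^{-1}\tilde R$ is graded with degree-$n$ part $\{\tilde s^{-1}\tilde r:\tilde r\text{ homogeneous},\ \deg\tilde r-\deg\tilde s=n\}$. *)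

theory Defs
  imports "HOL-Algebra.Algebra" "HOL-Library.Extended_Real"
begin

definition filtration :: "('a, 'm) ring_scheme \<Rightarrow> ('a \<Rightarrow> ereal) \<Rightarrow> bool" where
  "filtration R w \<longleftrightarrow>
     (\<forall>r\<in>carrier R. w r = \<infinity> \<or> (\<exists>m::int. w r = ereal (real_of_int m))) \<and>
     w \<zero>\<^bsub>R\<^esub> = \<infinity> \<and>
     0 \<le> w \<one>\<^bsub>R\<^esub> \<and>
     (\<forall>x\<in>carrier R. w (\<ominus>\<^bsub>R\<^esub> x) = w x) \<and>
     (\<forall>x\<in>carrier R. \<forall>y\<in>carrier R. min (w x) (w y) \<le> w (x \<oplus>\<^bsub>R\<^esub> y)) \<and>
     (\<forall>x\<in>carrier R. \<forall>y\<in>carrier R. w x + w y \<le> w (x \<otimes>\<^bsub>R\<^esub> y))"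

definition separated :: "('a, 'm) ring_scheme \<Rightarrow> ('a \<Rightarrow> ereal) \<Rightarrow> bool" where
  "separated R w \<longleftrightarrow> (\<forall>r\<in>carrier R. w r = \<infinity> \<longrightarrow> r = \<zero>\<^bsub>R\<^esub>)"

definition Fl :: "('a, 'm) ring_scheme \<Rightarrow> ('a \<Rightarrow> ereal) \<Rightarrow> int \<Rightarrow> 'a set" where
  "Fl R w n = {r \<in> carrier R. ereal (real_of_int n) \<le> w r}"

text \<open>An element \<Sum> r_n t^{-n} is represented by its coefficient function n \<mapsto> r_n
  (finitely supported, r_n \<in> F_n R); the coefficient at n is the degree n component.\<close>
definition rees_ring :: "('a, 'm) ring_scheme \<Rightarrow> ('a \<Rightarrow> ereal) \<Rightarrow> (int \<Rightarrow> 'a) ring" where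
  "rees_ring R w =
    \<lparr>carrier = {f. (\<forall>n. f n \<in> Fl R w n) \<and> finite {n. f n \<noteq> \<zero>\<^bsub>R\<^esub>}},
     monoid.mult = (\<lambda>f g k. finsum R (\<lambda>n. f n \<otimes>\<^bsub>R\<^esub> g (k - n)) {n. f n \<noteq> \<zero>\<^bsub>R\<^esub>}),
     one = (\<lambda>n. if n = 0 then \<one>\<^bsub>R\<^esub> else \<zero>\<^bsub>R\<^esub>),
     ring.zero = (\<lambda>n. \<zero>\<^bsub>R\<^esub>),
     ring.add = (\<lambda>f g n. f n \<oplus>\<^bsub>R\<^esub> g n)\<rparr>"

text \<open>t = 1 * t^1, of degree -1.\<close>
definition rees_t :: "('a, 'm) ring_scheme \<Rightarrow> int \<Rightarrow> 'a" where
  "rees_t R = (\<lambda>n. if n = -1 then \<one>\<^bsub>R\<^esub> else \<zero>\<^bsub>R\<^esub>)"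

definition rees_homog :: "('a, 'm) ring_scheme \<Rightarrow> ('a \<Rightarrow> ereal) \<Rightarrow> (int \<Rightarrow> 'a) \<Rightarrow> int \<Rightarrow> bool" where
  "rees_homog R w f d \<longleftrightarrow> f \<in> carrier (rees_ring R w) \<and> (\<forall>n. n \<noteq> d \<longrightarrow> f n = \<zero>\<^bsub>R\<^esub>)"

text \<open>An element of gr_w(R) = \<Oplus>_n F_n/F_{n+1} is represented by the function n \<mapsto> its
  degree n component, a coset F_{n+1} + a with a \<in> F_n, almost all trivial.\<close>
definition gr_rep :: "('a, 'm) ring_scheme \<Rightarrow> ('a \<Rightarrow> ereal) \<Rightarrow> (int \<Rightarrow> 'a set) \<Rightarrow> int \<Rightarrow> 'a" where
  "gr_rep R w g n = (SOME a. a \<in> Fl R w n \<and> g n = Fl R w (n + 1) +>\<^bsub>R\<^esub> a)"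

definition gr_ring :: "('a, 'm) ring_scheme \<Rightarrow> ('a \<Rightarrow> ereal) \<Rightarrow> (int \<Rightarrow> 'a set) ring" where
  "gr_ring R w =
    \<lparr>carrier = {g. (\<forall>n. \<exists>a\<in>Fl R w n. g n = Fl R w (n + 1) +>\<^bsub>R\<^esub> a) \<and>
                   finite {n. g n \<noteq> Fl R w (n + 1)}},
     monoid.mult = (\<lambda>g h k. Fl R w (k + 1) +>\<^bsub>R\<^esub>
               finsum R (\<lambda>n. gr_rep R w g n \<otimes>\<^bsub>R\<^esub> gr_rep R w h (k - n)) {n. g n \<noteq> Fl R w (n + 1)}),
     one = (\<lambda>n. Fl R w (n + 1) +>\<^bsub>R\<^esub> (if n = 0 then \<one>\<^bsub>R\<^esub> else \<zero>\<^bsub>R\<^esub>)),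
     ring.zero = (\<lambda>n. Fl R w (n + 1)),
     ring.add = (\<lambda>g h n. Fl R w (n + 1) +>\<^bsub>R\<^esub> (gr_rep R w g n \<oplus>\<^bsub>R\<^esub> gr_rep R w h n))\<rparr>"

definition gr_homog :: "('a, 'm) ring_scheme \<Rightarrow> ('a \<Rightarrow> ereal) \<Rightarrow> (int \<Rightarrow> 'a set) \<Rightarrow> int \<Rightarrow> bool" where
  "gr_homog R w g d \<longleftrightarrow> g \<in> carrier (gr_ring R w) \<and> (\<forall>n. n \<noteq> d \<longrightarrow> g n = Fl R w (n + 1))"

text \<open>gr(r) = r + F_{w(r)+1} R, placed in degree w(r) (used for r \<noteq> 0).\<close>
definition gr_elt :: "('a, 'm) ring_scheme \<Rightarrow> ('a \<Rightarrow> ereal) \<Rightarrow> 'a \<Rightarrow> int \<Rightarrow> 'a set" where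
  "gr_elt R w r = (\<lambda>n. if w r = ereal (real_of_int n) then Fl R w (n + 1) +>\<^bsub>R\<^esub> r else Fl R w (n + 1))"

definition rho1 :: "('a, 'm) ring_scheme \<Rightarrow> (int \<Rightarrow> 'a) \<Rightarrow> 'a" where
  "rho1 R f = finsum R f {n. f n \<noteq> \<zero>\<^bsub>R\<^esub>}"

definition rho2 :: "('a, 'm) ring_scheme \<Rightarrow> ('a \<Rightarrow> ereal) \<Rightarrow> (int \<Rightarrow> 'a) \<Rightarrow> int \<Rightarrow> 'a set" where
  "rho2 R w f = (\<lambda>n. Fl R w (n + 1) +>\<^bsub>R\<^esub> f n)"

definition left_ideal :: "('a, 'm) ring_scheme \<Rightarrow> 'a set \<Rightarrow> bool" where
  "left_ideal A I \<longleftrightarrow> I \<subseteq> carrier A \<and> subgroup I (add_monoid A) \<and>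
     (\<forall>a\<in>carrier A. \<forall>x\<in>I. a \<otimes>\<^bsub>A\<^esub> x \<in> I)"

definition right_ideal :: "('a, 'm) ring_scheme \<Rightarrow> 'a set \<Rightarrow> bool" where
  "right_ideal A I \<longleftrightarrow> I \<subseteq> carrier A \<and> subgroup I (add_monoid A) \<and>
     (\<forall>a\<in>carrier A. \<forall>x\<in>I. x \<otimes>\<^bsub>A\<^esub> a \<in> I)"

definition left_noetherian :: "('a, 'm) ring_scheme \<Rightarrow> bool" where
  "left_noetherian A \<longleftrightarrow> (\<forall>I :: nat \<Rightarrow> 'a set.
     (\<forall>n. left_ideal A (I n)) \<and> (\<forall>n. I n \<subseteq> I (Suc n)) \<longrightarrow> (\<exists>N. \<forall>n\<ge>N. I n = I N))"

definition right_noetherian :: "('a, 'm) ring_scheme \<Rightarrow> bool" where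
  "right_noetherian A \<longleftrightarrow> (\<forall>I :: nat \<Rightarrow> 'a set.
     (\<forall>n. right_ideal A (I n)) \<and> (\<forall>n. I n \<subseteq> I (Suc n)) \<longrightarrow> (\<exists>N. \<forall>n\<ge>N. I n = I N))"

definition maximal_left_ideal :: "('a, 'm) ring_scheme \<Rightarrow> 'a set \<Rightarrow> bool" where
  "maximal_left_ideal A M \<longleftrightarrow> left_ideal A M \<and> M \<noteq> carrier A \<and>
     (\<forall>J. left_ideal A J \<and> M \<subseteq> J \<longrightarrow> J = M \<or> J = carrier A)"

definition jacobson_radical :: "('a, 'm) ring_scheme \<Rightarrow> 'a set" where
  "jacobson_radical A = carrier A \<inter> \<Inter> {M. maximal_left_ideal A M}"

definition zariskian :: "('a, 'm) ring_scheme \<Rightarrow> ('a \<Rightarrow> ereal) \<Rightarrow> bool" where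
  "zariskian R w \<longleftrightarrow> left_noetherian (rees_ring R w) \<and> right_noetherian (rees_ring R w) \<and>
     Fl R w 1 \<subseteq> jacobson_radical (R\<lparr>carrier := Fl R w 0\<rparr>)"

definition mult_closed :: "('a, 'm) ring_scheme \<Rightarrow> 'a set \<Rightarrow> bool" where
  "mult_closed A T \<longleftrightarrow> T \<subseteq> carrier A \<and> \<one>\<^bsub>A\<^esub> \<in> T \<and> (\<forall>x\<in>T. \<forall>y\<in>T. x \<otimes>\<^bsub>A\<^esub> y \<in> T)"

definition left_ore :: "('a, 'm) ring_scheme \<Rightarrow> 'a set \<Rightarrow> bool" where
  "left_ore A T \<longleftrightarrow> (\<forall>s\<in>T. \<forall>r\<in>carrier A. \<exists>s'\<in>T. \<exists>r'\<in>carrier A. s' \<otimes>\<^bsub>A\<^esub> r = r' \<otimes>\<^bsub>A\<^esub> s)"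

definition left_ring_of_fractions ::
  "('a, 'm) ring_scheme \<Rightarrow> 'a set \<Rightarrow> ('b, 'n) ring_scheme \<Rightarrow> ('a \<Rightarrow> 'b) \<Rightarrow> bool" where
  "left_ring_of_fractions A S Q phi \<longleftrightarrow> ring Q \<and> phi \<in> ring_hom A Q \<and>
     (\<forall>s\<in>S. phi s \<in> Units Q) \<and>
     (\<forall>q\<in>carrier Q. \<exists>s\<in>S. \<exists>r\<in>carrier A. q = inv\<^bsub>Q\<^esub> (phi s) \<otimes>\<^bsub>Q\<^esub> phi r) \<and>
     (\<forall>r\<in>carrier A. phi r = \<zero>\<^bsub>Q\<^esub> \<longleftrightarrow> (\<exists>s\<in>S. s \<otimes>\<^bsub>A\<^esub> r = \<zero>\<^bsub>A\<^esub>))"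

definition frac_deg_part ::
  "('b, 'n) ring_scheme \<Rightarrow> ('a \<Rightarrow> 'b) \<Rightarrow> 'a set \<Rightarrow> ('a \<Rightarrow> int \<Rightarrow> bool) \<Rightarrow> int \<Rightarrow> 'b set" where
  "frac_deg_part Q phi S homd n =
     {inv\<^bsub>Q\<^esub> (phi s) \<otimes>\<^bsub>Q\<^esub> phi r | s r d. s \<in> S \<and> homd s d \<and> homd r (d + n)}"

definition S_set :: "('a, 'm) ring_scheme \<Rightarrow> ('a \<Rightarrow> ereal) \<Rightarrow> (int \<Rightarrow> 'a set) set \<Rightarrow> 'a set" where
  "S_set R w T = {r \<in> carrier R. r \<noteq> \<zero>\<^bsub>R\<^esub> \<and> gr_elt R w r \<in> T}"

definition St_set :: "('a, 'm) ring_scheme \<Rightarrow> ('a \<Rightarrow> ereal) \<Rightarrow> (int \<Rightarrow> 'a set) set \<Rightarrow> (int \<Rightarrow> 'a) set" where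
  "St_set R w T = {s \<in> carrier (rees_ring R w). (\<exists>d. rees_homog R w s d) \<and> rho2 R w s \<in> T}"

end

theory Submission
  imports Defs
begin



lemma (in monoid) inv_mult_units':
  assumes x: "x \<in> Units G" and y: "y \<in> Units G"
  shows "inv (x \<otimes> y) = inv y \<otimes> inv x"
proof -
  have c: "x \<in> carrier G" "y \<in> carrier G" "inv x \<in> carrier G" "inv y \<in> carrier G" using x y by auto
  have 1: "(x \<otimes> y) \<otimes> (inv y \<otimes> inv x) = \<one>"
  proof -
    have "(x \<otimes> y) \<otimes> (inv y \<otimes> inv x) = x \<otimes> ((y \<otimes> inv y) \<otimes> inv x)"
      using c by (simp only: m_assoc m_closed)
    also have "\<dots> = \<one>" using x y c by simp
    finally show ?thesis .
  qed
  have 2: "(inv y \<otimes> inv x) \<otimes> (x \<otimes> y) = \<one>"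
  proof -
    have "(inv y \<otimes> inv x) \<otimes> (x \<otimes> y) = inv y \<otimes> ((inv x \<otimes> x) \<otimes> y)"
      using c by (simp only: m_assoc m_closed)
    also have "\<dots> = \<one>" using x y c by simp
    finally show ?thesis .
  qed
  show ?thesis using inv_unique'[OF m_closed[OF c(1,2)] m_closed[OF c(4,3)] 1 2] by simp
qed

lemma (in monoid) units_cancel_mid:
  assumes a: "a \<in> carrier G" and v: "v \<in> Units G" and r: "r \<in> carrier G"
  shows "(a \<otimes> inv v) \<otimes> (v \<otimes> r) = a \<otimes> r"
proof -
  have c: "v \<in> carrier G" "inv v \<in> carrier G" using v by auto
  have "(a \<otimes> inv v) \<otimes> (v \<otimes> r) = a \<otimes> ((inv v \<otimes> v) \<otimes> r)"
    using a r c by (simp only: m_assoc m_closed)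
  also have "\<dots> = a \<otimes> r" using v r by simp
  finally show ?thesis .
qed

lemma (in monoid) units_lr:
  assumes u: "u \<in> Units G" and x: "x \<in> carrier G"
  shows "u \<otimes> (inv u \<otimes> x) = x" and "inv u \<otimes> (u \<otimes> x) = x"
    and "(x \<otimes> u) \<otimes> inv u = x" and "(x \<otimes> inv u) \<otimes> u = x"
proof -
  have c: "u \<in> carrier G" "inv u \<in> carrier G" using u by auto
  show "u \<otimes> (inv u \<otimes> x) = x" using c x u by (simp add: m_assoc[symmetric])
  show "inv u \<otimes> (u \<otimes> x) = x" using c x u by (simp add: m_assoc[symmetric])
  show "(x \<otimes> u) \<otimes> inv u = x" using c x u by (simp add: m_assoc)
  show "(x \<otimes> inv u) \<otimes> u = x" using c x u by (simp add: m_assoc)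
qed

lemma univ_frac:
  fixes A :: "('a,'m) ring_scheme" and Q :: "('b,'n) ring_scheme" and Q' :: "('c,'p) ring_scheme"
  assumes Qf: "left_ring_of_fractions A S Q lam"
  and rQ': "ring Q'" and psi: "psi \<in> ring_hom A Q'"
  and units: "\<forall>s\<in>S. psi s \<in> Units Q'"
  and mc: "mult_closed A S"
  and addc: "\<And>a b. a\<in>carrier A \<Longrightarrow> b\<in>carrier A \<Longrightarrow> a \<oplus>\<^bsub>A\<^esub> b \<in> carrier A"
  and mulc: "\<And>a b. a\<in>carrier A \<Longrightarrow> b\<in>carrier A \<Longrightarrow> a \<otimes>\<^bsub>A\<^esub> b \<in> carrier A"
  and z: "\<zero>\<^bsub>A\<^esub> \<in> carrier A" "\<zero>\<^bsub>A\<^esub> \<oplus>\<^bsub>A\<^esub> \<zero>\<^bsub>A\<^esub> = \<zero>\<^bsub>A\<^esub>"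
  and neg: "\<And>a. a\<in>carrier A \<Longrightarrow> \<exists>b\<in>carrier A. a \<oplus>\<^bsub>A\<^esub> b = \<zero>\<^bsub>A\<^esub>"
  shows "\<exists>h\<in>ring_hom Q Q'. \<forall>s\<in>S. \<forall>r\<in>carrier A.
           h (inv\<^bsub>Q\<^esub> (lam s) \<otimes>\<^bsub>Q\<^esub> lam r) = inv\<^bsub>Q'\<^esub> (psi s) \<otimes>\<^bsub>Q'\<^esub> psi r"
proof -
  note LF = Qf[unfolded left_ring_of_fractions_def]
  interpret Q: ring Q using LF by (rule conjunct1)
  interpret Q': ring Q' by (rule rQ')
  have lam: "lam \<in> ring_hom A Q" using LF by (rule conjunct2[THEN conjunct1])
  have lamU: "\<And>s. s\<in>S \<Longrightarrow> lam s \<in> Units Q"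
    using LF[THEN conjunct2, THEN conjunct2, THEN conjunct1] by (rule bspec)
  have rep: "\<And>q. q\<in>carrier Q \<Longrightarrow> \<exists>s\<in>S. \<exists>r\<in>carrier A. q = inv\<^bsub>Q\<^esub> (lam s) \<otimes>\<^bsub>Q\<^esub> lam r"
    using LF[THEN conjunct2, THEN conjunct2, THEN conjunct2, THEN conjunct1] by (rule bspec)
  have ker: "\<exists>s\<in>S. s \<otimes>\<^bsub>A\<^esub> r = \<zero>\<^bsub>A\<^esub>" if "r\<in>carrier A" "lam r = \<zero>\<^bsub>Q\<^esub>" for r
    using LF[THEN conjunct2, THEN conjunct2, THEN conjunct2, THEN conjunct2] that by simp
  have SA: "S \<subseteq> carrier A" and one: "\<one>\<^bsub>A\<^esub> \<in> S" and Smul: "\<And>x y. x\<in>S \<Longrightarrow> y\<in>S \<Longrightarrow> x \<otimes>\<^bsub>A\<^esub> y \<in> S"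
    using mc unfolding mult_closed_def by auto
  have lc: "\<And>a. a\<in>carrier A \<Longrightarrow> lam a \<in> carrier Q" by (rule ring_hom_closed[OF lam])
  have pc: "\<And>a. a\<in>carrier A \<Longrightarrow> psi a \<in> carrier Q'" by (rule ring_hom_closed[OF psi])
  have lm: "\<And>a b. a\<in>carrier A \<Longrightarrow> b\<in>carrier A \<Longrightarrow> lam (a \<otimes>\<^bsub>A\<^esub> b) = lam a \<otimes>\<^bsub>Q\<^esub> lam b"
    by (rule ring_hom_mult[OF lam])
  have la: "\<And>a b. a\<in>carrier A \<Longrightarrow> b\<in>carrier A \<Longrightarrow> lam (a \<oplus>\<^bsub>A\<^esub> b) = lam a \<oplus>\<^bsub>Q\<^esub> lam b"
    by (rule ring_hom_add[OF lam])
  have pm: "\<And>a b. a\<in>carrier A \<Longrightarrow> b\<in>carrier A \<Longrightarrow> psi (a \<otimes>\<^bsub>A\<^esub> b) = psi a \<otimes>\<^bsub>Q'\<^esub> psi b"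
    by (rule ring_hom_mult[OF psi])
  have pa: "\<And>a b. a\<in>carrier A \<Longrightarrow> b\<in>carrier A \<Longrightarrow> psi (a \<oplus>\<^bsub>A\<^esub> b) = psi a \<oplus>\<^bsub>Q'\<^esub> psi b"
    by (rule ring_hom_add[OF psi])
  have l0: "lam \<zero>\<^bsub>A\<^esub> = \<zero>\<^bsub>Q\<^esub>"
  proof -
    have "lam \<zero>\<^bsub>A\<^esub> \<oplus>\<^bsub>Q\<^esub> lam \<zero>\<^bsub>A\<^esub> = lam \<zero>\<^bsub>A\<^esub> \<oplus>\<^bsub>Q\<^esub> \<zero>\<^bsub>Q\<^esub>"
      using la[OF z(1) z(1)] z lc by simp
    then show ?thesis using lc[OF z(1)] by simp
  qed
  have p0: "psi \<zero>\<^bsub>A\<^esub> = \<zero>\<^bsub>Q'\<^esub>"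
  proof -
    have "psi \<zero>\<^bsub>A\<^esub> \<oplus>\<^bsub>Q'\<^esub> psi \<zero>\<^bsub>A\<^esub> = psi \<zero>\<^bsub>A\<^esub> \<oplus>\<^bsub>Q'\<^esub> \<zero>\<^bsub>Q'\<^esub>"
      using pa[OF z(1) z(1)] z pc by simp
    then show ?thesis using pc[OF z(1)] by simp
  qed
  have eqp: "psi a = psi b" if a: "a\<in>carrier A" and b: "b\<in>carrier A" and e: "lam a = lam b" for a b
  proof -
    obtain nb where nb: "nb \<in> carrier A" "b \<oplus>\<^bsub>A\<^esub> nb = \<zero>\<^bsub>A\<^esub>" using neg b by blast
    have "lam (a \<oplus>\<^bsub>A\<^esub> nb) = lam a \<oplus>\<^bsub>Q\<^esub> lam nb" by (rule la[OF a nb(1)])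
    also have "\<dots> = lam (b \<oplus>\<^bsub>A\<^esub> nb)" using e la[OF b nb(1)] by simp
    finally have "lam (a \<oplus>\<^bsub>A\<^esub> nb) = \<zero>\<^bsub>Q\<^esub>" using nb l0 by simp
    then obtain x where x: "x \<in> S" "x \<otimes>\<^bsub>A\<^esub> (a \<oplus>\<^bsub>A\<^esub> nb) = \<zero>\<^bsub>A\<^esub>" using ker addc a nb by blast
    have xA: "x \<in> carrier A" using x SA by auto
    have "psi x \<otimes>\<^bsub>Q'\<^esub> (psi a \<oplus>\<^bsub>Q'\<^esub> psi nb) = psi (x \<otimes>\<^bsub>A\<^esub> (a \<oplus>\<^bsub>A\<^esub> nb))"
      using pm[OF xA addc[OF a nb(1)]] pa[OF a nb(1)] by simp
    also have "\<dots> = psi x \<otimes>\<^bsub>Q'\<^esub> \<zero>\<^bsub>Q'\<^esub>" using x(2) p0 pc[OF xA] by simp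
    finally have "psi x \<otimes>\<^bsub>Q'\<^esub> (psi a \<oplus>\<^bsub>Q'\<^esub> psi nb) = psi x \<otimes>\<^bsub>Q'\<^esub> \<zero>\<^bsub>Q'\<^esub>" .
    then have 1: "psi a \<oplus>\<^bsub>Q'\<^esub> psi nb = \<zero>\<^bsub>Q'\<^esub>"
      using units x(1) pc a nb by (subst (asm) Q'.Units_l_cancel) auto
    have 2: "psi b \<oplus>\<^bsub>Q'\<^esub> psi nb = \<zero>\<^bsub>Q'\<^esub>" using pa[OF b nb(1), symmetric] nb(2) p0 by simp
    from 1 2 show ?thesis using pc a b nb by (metis Q'.add.inv_equality Q'.minus_equality)
  qed
  have wd: "inv\<^bsub>Q'\<^esub> (psi s) \<otimes>\<^bsub>Q'\<^esub> psi r = inv\<^bsub>Q'\<^esub> (psi s') \<otimes>\<^bsub>Q'\<^esub> psi r'"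
    if s: "s\<in>S" and r: "r\<in>carrier A" and s': "s'\<in>S" and r': "r'\<in>carrier A"
      and e: "inv\<^bsub>Q\<^esub> (lam s) \<otimes>\<^bsub>Q\<^esub> lam r = inv\<^bsub>Q\<^esub> (lam s') \<otimes>\<^bsub>Q\<^esub> lam r'" for s r s' r'
  proof -
    have sA: "s \<in> carrier A" "s' \<in> carrier A" using s s' SA by auto
    have Us: "lam s \<in> Units Q" "lam s' \<in> Units Q" using lamU s s' by auto
    define c where "c = lam s' \<otimes>\<^bsub>Q\<^esub> inv\<^bsub>Q\<^esub> (lam s)"
    have cc: "c \<in> carrier Q" unfolding c_def using Us by auto
    obtain u v where u: "u \<in> S" and v: "v \<in> carrier A" and cuv: "c = inv\<^bsub>Q\<^esub> (lam u) \<otimes>\<^bsub>Q\<^esub> lam v"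
      using rep[OF cc] by blast
    have uA: "u \<in> carrier A" using u SA by auto
    have Uu: "lam u \<in> Units Q" using lamU u by auto
    have uc: "lam u \<otimes>\<^bsub>Q\<^esub> c = lam v" using cuv Uu lc v
      by (simp add: Q.m_assoc[symmetric] Q.Units_closed)
    have cs: "c \<otimes>\<^bsub>Q\<^esub> lam s = lam s'" unfolding c_def using Us
      by (simp add: Q.m_assoc Q.Units_closed)
    have E1: "lam (u \<otimes>\<^bsub>A\<^esub> s') = lam (v \<otimes>\<^bsub>A\<^esub> s)"
    proof -
      have "lam (u \<otimes>\<^bsub>A\<^esub> s') = lam u \<otimes>\<^bsub>Q\<^esub> (c \<otimes>\<^bsub>Q\<^esub> lam s)" using cs lm uA sA by simp
      also have "\<dots> = (lam u \<otimes>\<^bsub>Q\<^esub> c) \<otimes>\<^bsub>Q\<^esub> lam s" using cc lc uA sA by (simp add: Q.m_assoc)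
      finally show ?thesis using uc lm v sA by simp
    qed
    have cr: "c \<otimes>\<^bsub>Q\<^esub> lam r = lam r'"
    proof -
      have "c \<otimes>\<^bsub>Q\<^esub> lam r = lam s' \<otimes>\<^bsub>Q\<^esub> (inv\<^bsub>Q\<^esub> (lam s) \<otimes>\<^bsub>Q\<^esub> lam r)"
        unfolding c_def using Us lc r by (simp add: Q.m_assoc Q.Units_closed)
      also have "\<dots> = lam r'" using e Us lc r' by (simp add: Q.m_assoc[symmetric] Q.Units_closed)
      finally show ?thesis .
    qed
    have E2: "lam (v \<otimes>\<^bsub>A\<^esub> r) = lam (u \<otimes>\<^bsub>A\<^esub> r')"
    proof -
      have "lam (u \<otimes>\<^bsub>A\<^esub> r') = lam u \<otimes>\<^bsub>Q\<^esub> (c \<otimes>\<^bsub>Q\<^esub> lam r)" using cr lm uA r' by simp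
      also have "\<dots> = (lam u \<otimes>\<^bsub>Q\<^esub> c) \<otimes>\<^bsub>Q\<^esub> lam r" using cc lc uA r by (simp add: Q.m_assoc)
      finally show ?thesis using uc lm v r by simp
    qed
    have P1: "psi u \<otimes>\<^bsub>Q'\<^esub> psi s' = psi v \<otimes>\<^bsub>Q'\<^esub> psi s"
      using eqp[OF mulc mulc E1] uA sA v pm by simp
    have P2: "psi v \<otimes>\<^bsub>Q'\<^esub> psi r = psi u \<otimes>\<^bsub>Q'\<^esub> psi r'"
      using eqp[OF mulc mulc E2] uA r r' v pm by simp
    have Pu: "psi u \<in> Units Q'" "psi s \<in> Units Q'" "psi s' \<in> Units Q'" using units u s s' by auto
    have "psi u \<otimes>\<^bsub>Q'\<^esub> (psi s' \<otimes>\<^bsub>Q'\<^esub> (inv\<^bsub>Q'\<^esub> (psi s) \<otimes>\<^bsub>Q'\<^esub> psi r))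
        = (psi u \<otimes>\<^bsub>Q'\<^esub> psi s') \<otimes>\<^bsub>Q'\<^esub> (inv\<^bsub>Q'\<^esub> (psi s) \<otimes>\<^bsub>Q'\<^esub> psi r)"
      using Pu pc r by (simp add: Q'.m_assoc Q'.Units_closed)
    also have "\<dots> = psi v \<otimes>\<^bsub>Q'\<^esub> (psi s \<otimes>\<^bsub>Q'\<^esub> (inv\<^bsub>Q'\<^esub> (psi s) \<otimes>\<^bsub>Q'\<^esub> psi r))"
      using P1 Pu pc r v by (simp add: Q'.m_assoc Q'.Units_closed)
    also have "\<dots> = psi v \<otimes>\<^bsub>Q'\<^esub> psi r"
      using Pu pc r v by (simp add: Q'.m_assoc[symmetric] Q'.Units_closed)
    also have "\<dots> = psi u \<otimes>\<^bsub>Q'\<^esub> (psi s' \<otimes>\<^bsub>Q'\<^esub> (inv\<^bsub>Q'\<^esub> (psi s') \<otimes>\<^bsub>Q'\<^esub> psi r'))"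
      using P2 Pu pc r' by (simp add: Q'.m_assoc[symmetric] Q'.Units_closed)
    finally have "psi s' \<otimes>\<^bsub>Q'\<^esub> (inv\<^bsub>Q'\<^esub> (psi s) \<otimes>\<^bsub>Q'\<^esub> psi r)
        = psi s' \<otimes>\<^bsub>Q'\<^esub> (inv\<^bsub>Q'\<^esub> (psi s') \<otimes>\<^bsub>Q'\<^esub> psi r')"
      using Pu pc r r' by (subst (asm) Q'.Units_l_cancel) (auto simp: Q'.Units_closed)
    then show ?thesis using Pu pc r r' by (subst (asm) Q'.Units_l_cancel) (auto simp: Q'.Units_closed)
  qed
  define pr where "pr q = (SOME p. fst p \<in> S \<and> snd p \<in> carrier A \<and>
       q = inv\<^bsub>Q\<^esub> (lam (fst p)) \<otimes>\<^bsub>Q\<^esub> lam (snd p))" for q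
  define h where "h q = inv\<^bsub>Q'\<^esub> (psi (fst (pr q))) \<otimes>\<^bsub>Q'\<^esub> psi (snd (pr q))" for q
  have hval: "h (inv\<^bsub>Q\<^esub> (lam s) \<otimes>\<^bsub>Q\<^esub> lam r) = inv\<^bsub>Q'\<^esub> (psi s) \<otimes>\<^bsub>Q'\<^esub> psi r"
    if s: "s\<in>S" and r: "r\<in>carrier A" for s r
  proof -
    let ?q = "inv\<^bsub>Q\<^esub> (lam s) \<otimes>\<^bsub>Q\<^esub> lam r"
    let ?P = "\<lambda>p. fst p \<in> S \<and> snd p \<in> carrier A \<and> ?q = inv\<^bsub>Q\<^esub> (lam (fst p)) \<otimes>\<^bsub>Q\<^esub> lam (snd p)"
    have "?P (s, r)" using s r by simp
    then have P: "?P (pr ?q)" unfolding pr_def by (rule someI)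
    have "inv\<^bsub>Q'\<^esub> (psi s) \<otimes>\<^bsub>Q'\<^esub> psi r = inv\<^bsub>Q'\<^esub> (psi (fst (pr ?q))) \<otimes>\<^bsub>Q'\<^esub> psi (snd (pr ?q))"
      using P by (intro wd[OF s r]) simp_all
    then show ?thesis unfolding h_def by simp
  qed
  have hc: "h q \<in> carrier Q'" if qQ: "q \<in> carrier Q" for q
  proof -
    obtain s r where s: "s\<in>S" and r: "r\<in>carrier A" and qe: "q = inv\<^bsub>Q\<^esub> (lam s) \<otimes>\<^bsub>Q\<^esub> lam r"
      using rep[OF qQ] by blast
    have u: "psi s \<in> Units Q'" using units s by blast
    have "h q = inv\<^bsub>Q'\<^esub> (psi s) \<otimes>\<^bsub>Q'\<^esub> psi r" unfolding qe by (rule hval[OF s r])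
    then show ?thesis using Q'.m_closed[OF Q'.Units_inv_closed[OF u] pc[OF r]] by simp
  qed
  have hadd: "h (q1 \<oplus>\<^bsub>Q\<^esub> q2) = h q1 \<oplus>\<^bsub>Q'\<^esub> h q2" if q1: "q1 \<in> carrier Q" and q2: "q2 \<in> carrier Q" for q1 q2
  proof -
    obtain s1 r1 where s1: "s1\<in>S" "r1\<in>carrier A" "q1 = inv\<^bsub>Q\<^esub> (lam s1) \<otimes>\<^bsub>Q\<^esub> lam r1" using rep q1 by blast
    obtain s2 r2 where s2: "s2\<in>S" "r2\<in>carrier A" "q2 = inv\<^bsub>Q\<^esub> (lam s2) \<otimes>\<^bsub>Q\<^esub> lam r2" using rep q2 by blast
    have sA: "s1 \<in> carrier A" "s2 \<in> carrier A" using s1 s2 SA by auto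
    have Us: "lam s1 \<in> Units Q" "lam s2 \<in> Units Q" using lamU s1 s2 by auto
    define c where "c = lam s2 \<otimes>\<^bsub>Q\<^esub> inv\<^bsub>Q\<^esub> (lam s1)"
    have cc: "c \<in> carrier Q" unfolding c_def using Us by auto
    obtain u v where u: "u \<in> S" and v: "v \<in> carrier A" and cuv: "c = inv\<^bsub>Q\<^esub> (lam u) \<otimes>\<^bsub>Q\<^esub> lam v"
      using rep[OF cc] by blast
    have uA: "u \<in> carrier A" using u SA by auto
    have Uu: "lam u \<in> Units Q" using lamU u by auto
    have uc: "lam u \<otimes>\<^bsub>Q\<^esub> c = lam v" using cuv Uu lc v
      by (simp add: Q.m_assoc[symmetric] Q.Units_closed)
    have cs: "c \<otimes>\<^bsub>Q\<^esub> lam s1 = lam s2" unfolding c_def using Us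
      by (simp add: Q.m_assoc Q.Units_closed)
    define m where "m = u \<otimes>\<^bsub>A\<^esub> s2"
    have mS: "m \<in> S" unfolding m_def using u s2 Smul by auto
    have mA: "m \<in> carrier A" using mS SA by auto
    have lmv: "lam m = lam v \<otimes>\<^bsub>Q\<^esub> lam s1"
    proof -
      have "lam m = lam u \<otimes>\<^bsub>Q\<^esub> (c \<otimes>\<^bsub>Q\<^esub> lam s1)" unfolding m_def using cs lm uA sA by simp
      also have "\<dots> = (lam u \<otimes>\<^bsub>Q\<^esub> c) \<otimes>\<^bsub>Q\<^esub> lam s1" using cc lc uA sA by (simp add: Q.m_assoc)
      finally show ?thesis using uc by simp
    qed
    have Um: "lam m \<in> Units Q" using lamU mS by auto
    have Uv: "lam v \<in> Units Q"
    proof -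
      have "lam v = lam m \<otimes>\<^bsub>Q\<^esub> inv\<^bsub>Q\<^esub> (lam s1)" using lmv Us lc v
        by (simp add: Q.m_assoc Q.Units_closed)
      then show ?thesis using Um Us by simp
    qed
    have e1: "q1 = inv\<^bsub>Q\<^esub> (lam m) \<otimes>\<^bsub>Q\<^esub> lam (v \<otimes>\<^bsub>A\<^esub> r1)"
    proof -
      have "inv\<^bsub>Q\<^esub> (lam m) = inv\<^bsub>Q\<^esub> (lam s1) \<otimes>\<^bsub>Q\<^esub> inv\<^bsub>Q\<^esub> (lam v)"
        using lmv Us Uv by (simp add: Q.inv_mult_units')
      then have "inv\<^bsub>Q\<^esub> (lam m) \<otimes>\<^bsub>Q\<^esub> lam (v \<otimes>\<^bsub>A\<^esub> r1)
          = (inv\<^bsub>Q\<^esub> (lam s1) \<otimes>\<^bsub>Q\<^esub> inv\<^bsub>Q\<^esub> (lam v)) \<otimes>\<^bsub>Q\<^esub> (lam v \<otimes>\<^bsub>Q\<^esub> lam r1)"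
        using lm[OF v s1(2)] by simp
      also have "\<dots> = inv\<^bsub>Q\<^esub> (lam s1) \<otimes>\<^bsub>Q\<^esub> lam r1"
        using Q.units_cancel_mid[OF Q.Units_inv_closed[OF Us(1)] Uv lc[OF s1(2)]] .
      finally show ?thesis using s1(3) by simp
    qed
    have e2: "q2 = inv\<^bsub>Q\<^esub> (lam m) \<otimes>\<^bsub>Q\<^esub> lam (u \<otimes>\<^bsub>A\<^esub> r2)"
    proof -
      have "inv\<^bsub>Q\<^esub> (lam m) = inv\<^bsub>Q\<^esub> (lam s2) \<otimes>\<^bsub>Q\<^esub> inv\<^bsub>Q\<^esub> (lam u)"
        unfolding m_def using lm uA sA Us Uu by (simp add: Q.inv_mult_units')
      then have "inv\<^bsub>Q\<^esub> (lam m) \<otimes>\<^bsub>Q\<^esub> lam (u \<otimes>\<^bsub>A\<^esub> r2)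
          = (inv\<^bsub>Q\<^esub> (lam s2) \<otimes>\<^bsub>Q\<^esub> inv\<^bsub>Q\<^esub> (lam u)) \<otimes>\<^bsub>Q\<^esub> (lam u \<otimes>\<^bsub>Q\<^esub> lam r2)"
        using lm[OF uA s2(2)] by simp
      also have "\<dots> = inv\<^bsub>Q\<^esub> (lam s2) \<otimes>\<^bsub>Q\<^esub> lam r2"
        using Q.units_cancel_mid[OF Q.Units_inv_closed[OF Us(2)] Uu lc[OF s2(2)]] .
      finally show ?thesis using s2(3) by simp
    qed
    have vr: "v \<otimes>\<^bsub>A\<^esub> r1 \<in> carrier A" "u \<otimes>\<^bsub>A\<^esub> r2 \<in> carrier A" using mulc v uA s1 s2 by auto
    have "q1 \<oplus>\<^bsub>Q\<^esub> q2 = inv\<^bsub>Q\<^esub> (lam m) \<otimes>\<^bsub>Q\<^esub> lam (v \<otimes>\<^bsub>A\<^esub> r1 \<oplus>\<^bsub>A\<^esub> u \<otimes>\<^bsub>A\<^esub> r2)"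
      using e1 e2 la vr lc Um by (simp add: Q.r_distr Q.Units_closed)
    then have "h (q1 \<oplus>\<^bsub>Q\<^esub> q2) = inv\<^bsub>Q'\<^esub> (psi m) \<otimes>\<^bsub>Q'\<^esub> psi (v \<otimes>\<^bsub>A\<^esub> r1 \<oplus>\<^bsub>A\<^esub> u \<otimes>\<^bsub>A\<^esub> r2)"
      using hval mS addc vr by simp
    also have "\<dots> = inv\<^bsub>Q'\<^esub> (psi m) \<otimes>\<^bsub>Q'\<^esub> psi (v \<otimes>\<^bsub>A\<^esub> r1) \<oplus>\<^bsub>Q'\<^esub> inv\<^bsub>Q'\<^esub> (psi m) \<otimes>\<^bsub>Q'\<^esub> psi (u \<otimes>\<^bsub>A\<^esub> r2)"
      using pa vr pc units mS by (simp add: Q'.r_distr Q'.Units_closed)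
    also have "\<dots> = h q1 \<oplus>\<^bsub>Q'\<^esub> h q2" using e1 e2 hval mS vr by simp
    finally show ?thesis .
  qed
  have hmul: "h (q1 \<otimes>\<^bsub>Q\<^esub> q2) = h q1 \<otimes>\<^bsub>Q'\<^esub> h q2" if q1: "q1 \<in> carrier Q" and q2: "q2 \<in> carrier Q" for q1 q2
  proof -
    obtain s1 r1 where s1: "s1\<in>S" "r1\<in>carrier A" "q1 = inv\<^bsub>Q\<^esub> (lam s1) \<otimes>\<^bsub>Q\<^esub> lam r1" using rep q1 by blast
    obtain s2 r2 where s2: "s2\<in>S" "r2\<in>carrier A" "q2 = inv\<^bsub>Q\<^esub> (lam s2) \<otimes>\<^bsub>Q\<^esub> lam r2" using rep q2 by blast
    have sA: "s1 \<in> carrier A" "s2 \<in> carrier A" using s1 s2 SA by auto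
    have Us: "lam s1 \<in> Units Q" "lam s2 \<in> Units Q" using lamU s1 s2 by auto
    define c where "c = lam r1 \<otimes>\<^bsub>Q\<^esub> inv\<^bsub>Q\<^esub> (lam s2)"
    have cc: "c \<in> carrier Q" unfolding c_def using Us lc s1 by auto
    obtain u v where u: "u \<in> S" and v: "v \<in> carrier A" and cuv: "c = inv\<^bsub>Q\<^esub> (lam u) \<otimes>\<^bsub>Q\<^esub> lam v"
      using rep[OF cc] by blast
    have uA: "u \<in> carrier A" using u SA by auto
    have Uu: "lam u \<in> Units Q" using lamU u by auto
    have uc: "lam u \<otimes>\<^bsub>Q\<^esub> c = lam v" using cuv Uu lc v
      by (simp add: Q.m_assoc[symmetric] Q.Units_closed)
    have cs: "c \<otimes>\<^bsub>Q\<^esub> lam s2 = lam r1" unfolding c_def using Us lc s1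
      by (simp add: Q.m_assoc Q.Units_closed)
    have E: "lam (u \<otimes>\<^bsub>A\<^esub> r1) = lam (v \<otimes>\<^bsub>A\<^esub> s2)"
    proof -
      have "lam (u \<otimes>\<^bsub>A\<^esub> r1) = lam u \<otimes>\<^bsub>Q\<^esub> (c \<otimes>\<^bsub>Q\<^esub> lam s2)" using cs lm uA s1 by simp
      also have "\<dots> = (lam u \<otimes>\<^bsub>Q\<^esub> c) \<otimes>\<^bsub>Q\<^esub> lam s2" using cc lc uA sA by (simp add: Q.m_assoc)
      finally show ?thesis using uc lm v sA by simp
    qed
    have P: "psi u \<otimes>\<^bsub>Q'\<^esub> psi r1 = psi v \<otimes>\<^bsub>Q'\<^esub> psi s2"
      using eqp[OF mulc mulc E] uA s1 sA v pm by simp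
    have usS: "u \<otimes>\<^bsub>A\<^esub> s1 \<in> S" using Smul u s1 by auto
    have vr: "v \<otimes>\<^bsub>A\<^esub> r2 \<in> carrier A" using mulc v s2 by auto
    have "q1 \<otimes>\<^bsub>Q\<^esub> q2 = inv\<^bsub>Q\<^esub> (lam s1) \<otimes>\<^bsub>Q\<^esub> (lam r1 \<otimes>\<^bsub>Q\<^esub> inv\<^bsub>Q\<^esub> (lam s2)) \<otimes>\<^bsub>Q\<^esub> lam r2"
      using s1 s2 Us lc by (simp add: Q.m_assoc Q.Units_closed)
    also have "\<dots> = inv\<^bsub>Q\<^esub> (lam s1) \<otimes>\<^bsub>Q\<^esub> inv\<^bsub>Q\<^esub> (lam u) \<otimes>\<^bsub>Q\<^esub> (lam v \<otimes>\<^bsub>Q\<^esub> lam r2)"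
      using cuv[unfolded c_def] Us Uu lc v s2 by (simp add: Q.m_assoc Q.Units_closed)
    also have "\<dots> = inv\<^bsub>Q\<^esub> (lam (u \<otimes>\<^bsub>A\<^esub> s1)) \<otimes>\<^bsub>Q\<^esub> lam (v \<otimes>\<^bsub>A\<^esub> r2)"
      using lm uA sA v s2 Us Uu by (simp add: Q.inv_mult_units')
    finally have "h (q1 \<otimes>\<^bsub>Q\<^esub> q2) = inv\<^bsub>Q'\<^esub> (psi (u \<otimes>\<^bsub>A\<^esub> s1)) \<otimes>\<^bsub>Q'\<^esub> psi (v \<otimes>\<^bsub>A\<^esub> r2)"
      using hval usS vr by simp
    also have "\<dots> = inv\<^bsub>Q'\<^esub> (psi s1) \<otimes>\<^bsub>Q'\<^esub> (inv\<^bsub>Q'\<^esub> (psi u) \<otimes>\<^bsub>Q'\<^esub> psi v) \<otimes>\<^bsub>Q'\<^esub> psi r2"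
      using pm uA sA v s2 units u s1 pc by (simp add: Q'.inv_mult_units' Q'.m_assoc Q'.Units_closed)
    also have "inv\<^bsub>Q'\<^esub> (psi u) \<otimes>\<^bsub>Q'\<^esub> psi v = psi r1 \<otimes>\<^bsub>Q'\<^esub> inv\<^bsub>Q'\<^esub> (psi s2)"
    proof -
      have Uu': "psi u \<in> Units Q'" "psi s2 \<in> Units Q'" using units u s2 by auto
      have "psi u \<otimes>\<^bsub>Q'\<^esub> (inv\<^bsub>Q'\<^esub> (psi u) \<otimes>\<^bsub>Q'\<^esub> psi v) = psi v"
        by (rule Q'.units_lr(1)[OF Uu'(1) pc[OF v]])
      also have "\<dots> = (psi v \<otimes>\<^bsub>Q'\<^esub> psi s2) \<otimes>\<^bsub>Q'\<^esub> inv\<^bsub>Q'\<^esub> (psi s2)"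
        by (rule Q'.units_lr(3)[OF Uu'(2) pc[OF v], symmetric])
      also have "\<dots> = psi u \<otimes>\<^bsub>Q'\<^esub> (psi r1 \<otimes>\<^bsub>Q'\<^esub> inv\<^bsub>Q'\<^esub> (psi s2))"
        unfolding P[symmetric] using Q'.Units_inv_closed[OF Uu'(2)] pc[OF uA] pc[OF s1(2)] by (simp add: Q'.m_assoc)
      finally have "psi u \<otimes>\<^bsub>Q'\<^esub> (inv\<^bsub>Q'\<^esub> (psi u) \<otimes>\<^bsub>Q'\<^esub> psi v) = psi u \<otimes>\<^bsub>Q'\<^esub> (psi r1 \<otimes>\<^bsub>Q'\<^esub> inv\<^bsub>Q'\<^esub> (psi s2))" .
      then show ?thesis using Uu' pc v s1 by (subst (asm) Q'.Units_l_cancel) (auto simp: Q'.Units_closed)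
    qed
    also have "inv\<^bsub>Q'\<^esub> (psi s1) \<otimes>\<^bsub>Q'\<^esub> (psi r1 \<otimes>\<^bsub>Q'\<^esub> inv\<^bsub>Q'\<^esub> (psi s2)) \<otimes>\<^bsub>Q'\<^esub> psi r2 = h q1 \<otimes>\<^bsub>Q'\<^esub> h q2"
      using hval s1 s2 units pc by (simp add: Q'.m_assoc Q'.Units_closed)
    finally show ?thesis .
  qed
  have hone: "h \<one>\<^bsub>Q\<^esub> = \<one>\<^bsub>Q'\<^esub>"
  proof -
    have "\<one>\<^bsub>Q\<^esub> = inv\<^bsub>Q\<^esub> (lam \<one>\<^bsub>A\<^esub>) \<otimes>\<^bsub>Q\<^esub> lam \<one>\<^bsub>A\<^esub>" using lam ring_hom_one by fastforce
    then have "h \<one>\<^bsub>Q\<^esub> = inv\<^bsub>Q'\<^esub> (psi \<one>\<^bsub>A\<^esub>) \<otimes>\<^bsub>Q'\<^esub> psi \<one>\<^bsub>A\<^esub>" using hval one SA by auto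
    then show ?thesis using psi ring_hom_one by fastforce
  qed
  have "h \<in> ring_hom Q Q'" by (rule ring_hom_memI) (auto simp: hc hadd hmul hone)
  then show ?thesis using hval by blast
qed




locale filt = ring R for R (structure) + fixes w assumes filt: "filtration R w"
begin

lemma w_props:
  shows w_int: "\<And>r. r \<in> carrier R \<Longrightarrow> w r = \<infinity> \<or> (\<exists>m::int. w r = ereal (real_of_int m))"
    and w_zero: "w \<zero> = \<infinity>"
    and w_one: "0 \<le> w \<one>"
    and w_neg: "\<And>x. x \<in> carrier R \<Longrightarrow> w (\<ominus> x) = w x"
    and w_add: "\<And>x y. x \<in> carrier R \<Longrightarrow> y \<in> carrier R \<Longrightarrow> min (w x) (w y) \<le> w (x \<oplus> y)"
    and w_mult: "\<And>x y. x \<in> carrier R \<Longrightarrow> y \<in> carrier R \<Longrightarrow> w x + w y \<le> w (x \<otimes> y)"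
  using filt unfolding filtration_def by (elim conjE; (intro conjI)?; blast)+

lemma Fl_mem: "a \<in> Fl R w n \<longleftrightarrow> a \<in> carrier R \<and> ereal (real_of_int n) \<le> w a"
  unfolding Fl_def by simp

lemma Fl_carrier: "a \<in> Fl R w n \<Longrightarrow> a \<in> carrier R"
  unfolding Fl_def by simp

lemma Fl_zero: "\<zero> \<in> Fl R w n"
  unfolding Fl_def using w_zero by simp

lemma Fl_add: "a \<in> Fl R w n \<Longrightarrow> b \<in> Fl R w n \<Longrightarrow> a \<oplus> b \<in> Fl R w n"
  unfolding Fl_def using w_add by (auto intro: order_trans[OF _ w_add])

lemma Fl_neg: "a \<in> Fl R w n \<Longrightarrow> \<ominus> a \<in> Fl R w n"
  unfolding Fl_mem using w_neg by simp

lemma Fl_minus: "a \<in> Fl R w n \<Longrightarrow> b \<in> Fl R w n \<Longrightarrow> a \<ominus> b \<in> Fl R w n"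
  by (simp add: minus_eq Fl_add Fl_neg)

lemma Fl_mono: "m \<le> n \<Longrightarrow> a \<in> Fl R w n \<Longrightarrow> a \<in> Fl R w m"
proof -
  assume mn: "m \<le> n" and a: "a \<in> Fl R w n"
  have "ereal (real_of_int m) \<le> ereal (real_of_int n)" using mn by simp
  also have "\<dots> \<le> w a" using a unfolding Fl_mem by simp
  finally show ?thesis using a unfolding Fl_mem by simp
qed

lemma Fl_mult: "a \<in> Fl R w m \<Longrightarrow> b \<in> Fl R w n \<Longrightarrow> a \<otimes> b \<in> Fl R w (m + n)"
proof -
  assume a: "a \<in> Fl R w m" and b: "b \<in> Fl R w n"
  have "ereal (real_of_int (m + n)) = ereal (real_of_int m) + ereal (real_of_int n)" by simp
  also have "\<dots> \<le> w a + w b" using a b unfolding Fl_mem by (intro add_mono) simp_all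
  also have "\<dots> \<le> w (a \<otimes> b)" using a b unfolding Fl_mem by (intro w_mult) simp_all
  finally show ?thesis using a b unfolding Fl_mem by simp
qed

lemma one_Fl0: "\<one> \<in> Fl R w 0"
  unfolding Fl_def using w_one by (simp add: zero_ereal_def)

lemma Fl_subgroup: "additive_subgroup (Fl R w n) R"
  unfolding additive_subgroup_def
proof (rule add.subgroupI)
  show "Fl R w n \<subseteq> carrier R" using Fl_carrier by auto
  show "Fl R w n \<noteq> {}" using Fl_zero by blast
  show "\<And>a. a \<in> Fl R w n \<Longrightarrow> \<ominus> a \<in> Fl R w n" by (rule Fl_neg)
  show "\<And>a b. a \<in> Fl R w n \<Longrightarrow> b \<in> Fl R w n \<Longrightarrow> a \<oplus> b \<in> Fl R w n" by (rule Fl_add)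
qed

lemma Fl_abelian: "abelian_subgroup (Fl R w n) R"
  by (rule abelian_subgroupI3[OF Fl_subgroup]) (rule is_abelian_group)

lemma Fl_finsum: "(\<And>i. i \<in> A \<Longrightarrow> f i \<in> Fl R w n) \<Longrightarrow> finsum R f A \<in> Fl R w n"
proof (induction A rule: infinite_finite_induct)
  case (infinite A) then show ?case by (simp add: finsum_infinite Fl_zero)
next
  case empty then show ?case by (simp add: Fl_zero)
next
  case (insert x F)
  have "f \<in> F \<rightarrow> carrier R" "f x \<in> carrier R" using insert.prems by (auto intro: Fl_carrier)
  then show ?case using insert by (simp add: finsum_insert Fl_add)
qed

lemma coset_eq: "a \<in> carrier R \<Longrightarrow> b \<in> carrier R \<Longrightarrow> (Fl R w n +> a = Fl R w n +> b) \<longleftrightarrow> a \<ominus> b \<in> Fl R w n"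
proof -
  assume a: "a \<in> carrier R" and b: "b \<in> carrier R"
  interpret F: abelian_subgroup "Fl R w n" R by (rule Fl_abelian)
  show ?thesis
  proof
    assume "Fl R w n +> a = Fl R w n +> b"
    then have "a \<in> Fl R w n +> b" using F.a_repr_independenceD a by blast
    then show "a \<ominus> b \<in> Fl R w n" using F.a_rcos_module_minus[OF ring_axioms b a] by simp
  next
    assume "a \<ominus> b \<in> Fl R w n"
    then have "a \<in> Fl R w n +> b" using F.a_rcos_module_minus[OF ring_axioms b a] by simp
    then show "Fl R w n +> a = Fl R w n +> b" using F.a_repr_independence' b by blast
  qed
qed

lemma coset_zero_iff: "a \<in> carrier R \<Longrightarrow> (Fl R w n +> a = Fl R w n) \<longleftrightarrow> a \<in> Fl R w n"
proof -
  assume a: "a \<in> carrier R"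
  interpret F: abelian_subgroup "Fl R w n" R by (rule Fl_abelian)
  have "Fl R w n +> \<zero> = Fl R w n" by (rule F.a_rcos_const[OF Fl_zero])
  then show ?thesis using coset_eq[OF a zero_closed, of n] a by (simp add: minus_eq)
qed

lemma coset_self: "a \<in> Fl R w n \<Longrightarrow> Fl R w n +> a = Fl R w n"
  using coset_zero_iff Fl_carrier by blast

end




lemma (in abelian_monoid) finsum_swap:
  assumes A: "finite A" and B: "finite B" and c: "\<And>i j. i \<in> A \<Longrightarrow> j \<in> B \<Longrightarrow> f i j \<in> carrier G"
  shows "(\<Oplus>i\<in>A. \<Oplus>j\<in>B. f i j) = (\<Oplus>j\<in>B. \<Oplus>i\<in>A. f i j)"
  using A c
proof (induction A rule: finite_induct)
  case empty then show ?case by (simp add: finsum_empty finsum_zero)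
next
  case (insert x F)
  have c1: "(\<lambda>i. \<Oplus>j\<in>B. f i j) \<in> F \<rightarrow> carrier G" using insert.prems by (auto intro!: finsum_closed)
  have c2: "(\<Oplus>j\<in>B. f x j) \<in> carrier G" using insert.prems by (auto intro!: finsum_closed)
  have "(\<Oplus>i\<in>insert x F. \<Oplus>j\<in>B. f i j) = (\<Oplus>j\<in>B. f x j) \<oplus> (\<Oplus>i\<in>F. \<Oplus>j\<in>B. f i j)"
    using insert.hyps c1 c2 by (simp add: finsum_insert)
  also have "\<dots> = (\<Oplus>j\<in>B. f x j) \<oplus> (\<Oplus>j\<in>B. \<Oplus>i\<in>F. f i j)" using insert.IH insert.prems by simp
  also have "\<dots> = (\<Oplus>j\<in>B. f x j \<oplus> (\<Oplus>i\<in>F. f i j))"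
    using insert.prems by (subst finsum_addf) (auto intro!: finsum_closed)
  also have "\<dots> = (\<Oplus>j\<in>B. \<Oplus>i\<in>insert x F. f i j)"
    using insert.hyps insert.prems by (intro finsum_cong) (auto simp: finsum_insert)
  finally show ?case .
qed

context filt
begin

abbreviation RR where "RR \<equiv> rees_ring R w"

lemma rees_carrier: "f \<in> carrier RR \<longleftrightarrow> (\<forall>n. f n \<in> Fl R w n) \<and> finite {n. f n \<noteq> \<zero>}"
  by (simp add: rees_ring_def)

lemma rees_mult: "f \<otimes>\<^bsub>RR\<^esub> g = (\<lambda>k. \<Oplus>n\<in>{n. f n \<noteq> \<zero>}. f n \<otimes> g (k - n))"
  by (simp add: rees_ring_def)

lemma rees_add: "f \<oplus>\<^bsub>RR\<^esub> g = (\<lambda>n. f n \<oplus> g n)"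
  by (simp add: rees_ring_def)

lemma rees_one: "\<one>\<^bsub>RR\<^esub> = (\<lambda>n. if n = 0 then \<one> else \<zero>)"
  by (simp add: rees_ring_def)

lemma rees_zero: "\<zero>\<^bsub>RR\<^esub> = (\<lambda>n. \<zero>)"
  by (simp add: rees_ring_def)

lemma rees_Fl: "f \<in> carrier RR \<Longrightarrow> f n \<in> Fl R w n"
  by (simp add: rees_carrier)

lemma rees_c: "f \<in> carrier RR \<Longrightarrow> f n \<in> carrier R"
  using rees_Fl Fl_carrier by blast

lemma rees_fin: "f \<in> carrier RR \<Longrightarrow> finite {n. f n \<noteq> \<zero>}"
  by (simp add: rees_carrier)

lemma rees_carrierI: "(\<And>n. f n \<in> Fl R w n) \<Longrightarrow> finite {n. f n \<noteq> \<zero>} \<Longrightarrow> f \<in> carrier RR"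
  by (simp add: rees_carrier)

lemma rees_mult_supp:
  assumes f: "f \<in> carrier RR" and g: "g \<in> carrier RR"
  shows "{k. (f \<otimes>\<^bsub>RR\<^esub> g) k \<noteq> \<zero>} \<subseteq> (\<lambda>(a, b). a + b) ` ({n. f n \<noteq> \<zero>} \<times> {n. g n \<noteq> \<zero>})"
proof
  fix k assume k: "k \<in> {k. (f \<otimes>\<^bsub>RR\<^esub> g) k \<noteq> \<zero>}"
  show "k \<in> (\<lambda>(a, b). a + b) ` ({n. f n \<noteq> \<zero>} \<times> {n. g n \<noteq> \<zero>})"
  proof (rule ccontr)
    assume nk: "k \<notin> (\<lambda>(a, b). a + b) ` ({n. f n \<noteq> \<zero>} \<times> {n. g n \<noteq> \<zero>})"
    have "\<And>n. n \<in> {n. f n \<noteq> \<zero>} \<Longrightarrow> f n \<otimes> g (k - n) = \<zero>"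
    proof -
      fix n assume n: "n \<in> {n. f n \<noteq> \<zero>}"
      have "g (k - n) = \<zero>"
      proof (rule ccontr)
        assume "g (k - n) \<noteq> \<zero>"
        then have "(n, k - n) \<in> {n. f n \<noteq> \<zero>} \<times> {n. g n \<noteq> \<zero>}" using n by simp
        then have "k \<in> (\<lambda>(a, b). a + b) ` ({n. f n \<noteq> \<zero>} \<times> {n. g n \<noteq> \<zero>})"
          by (rule rev_image_eqI) simp
        then show False using nk by blast
      qed
      then show "f n \<otimes> g (k - n) = \<zero>" using rees_c[OF f] by simp
    qed
    then have "(f \<otimes>\<^bsub>RR\<^esub> g) k = \<zero>" unfolding rees_mult by (simp, intro add.finprod_one_eqI) simp
    then show False using k by simp
  qed
qed

lemma rees_mult_closed:
  assumes f: "f \<in> carrier RR" and g: "g \<in> carrier RR"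
  shows "f \<otimes>\<^bsub>RR\<^esub> g \<in> carrier RR"
proof (rule rees_carrierI)
  fix k
  show "(f \<otimes>\<^bsub>RR\<^esub> g) k \<in> Fl R w k" unfolding rees_mult
  proof (rule Fl_finsum)
    fix n
    have "f n \<otimes> g (k - n) \<in> Fl R w (n + (k - n))" by (rule Fl_mult[OF rees_Fl[OF f] rees_Fl[OF g]])
    then show "f n \<otimes> g (k - n) \<in> Fl R w k" by simp
  qed
next
  show "finite {k. (f \<otimes>\<^bsub>RR\<^esub> g) k \<noteq> \<zero>}"
    by (rule finite_subset[OF rees_mult_supp[OF f g]]) (use rees_fin[OF f] rees_fin[OF g] in simp)
qed

lemma rees_add_closed:
  assumes f: "f \<in> carrier RR" and g: "g \<in> carrier RR"
  shows "f \<oplus>\<^bsub>RR\<^esub> g \<in> carrier RR"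
proof (rule rees_carrierI)
  fix n show "(f \<oplus>\<^bsub>RR\<^esub> g) n \<in> Fl R w n" unfolding rees_add using Fl_add rees_Fl f g by simp
next
  have "{n. (f \<oplus>\<^bsub>RR\<^esub> g) n \<noteq> \<zero>} \<subseteq> {n. f n \<noteq> \<zero>} \<union> {n. g n \<noteq> \<zero>}" unfolding rees_add by auto
  then show "finite {n. (f \<oplus>\<^bsub>RR\<^esub> g) n \<noteq> \<zero>}" using rees_fin f g by (meson finite_UnI finite_subset)
qed

lemma rees_zero_closed: "\<zero>\<^bsub>RR\<^esub> \<in> carrier RR"
  by (rule rees_carrierI) (simp_all add: rees_zero Fl_zero)

lemma rees_zero_add: "\<zero>\<^bsub>RR\<^esub> \<oplus>\<^bsub>RR\<^esub> \<zero>\<^bsub>RR\<^esub> = \<zero>\<^bsub>RR\<^esub>"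
  by (simp add: rees_zero rees_add)

lemma rees_one_closed: "\<one>\<^bsub>RR\<^esub> \<in> carrier RR"
proof (rule rees_carrierI)
  fix n show "\<one>\<^bsub>RR\<^esub> n \<in> Fl R w n" unfolding rees_one using one_Fl0 Fl_zero by simp
next
  have "{n. \<one>\<^bsub>RR\<^esub> n \<noteq> \<zero>} \<subseteq> {0}" unfolding rees_one by auto
  then show "finite {n. \<one>\<^bsub>RR\<^esub> n \<noteq> \<zero>}" by (rule finite_subset) simp
qed

lemma rees_neg:
  assumes f: "f \<in> carrier RR"
  shows "\<exists>b\<in>carrier RR. f \<oplus>\<^bsub>RR\<^esub> b = \<zero>\<^bsub>RR\<^esub>"
proof
  show "(\<lambda>n. \<ominus> f n) \<in> carrier RR"
  proof (rule rees_carrierI)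
    fix n show "\<ominus> f n \<in> Fl R w n" using Fl_neg rees_Fl f by simp
  next
    have "{n. \<ominus> f n \<noteq> \<zero>} \<subseteq> {n. f n \<noteq> \<zero>}" by auto
    then show "finite {n. \<ominus> f n \<noteq> \<zero>}" using rees_fin[OF f] by (rule finite_subset)
  qed
  show "f \<oplus>\<^bsub>RR\<^esub> (\<lambda>n. \<ominus> f n) = \<zero>\<^bsub>RR\<^esub>" unfolding rees_add rees_zero
    using rees_c[OF f] by (simp add: r_neg)
qed

lemma rho1_eq:
  assumes f: "\<And>n. f n \<in> carrier R" and D: "finite D" "{n. f n \<noteq> \<zero>} \<subseteq> D"
  shows "rho1 R f = finsum R f D"
  unfolding rho1_def
  by (rule add.finprod_mono_neutral_cong_left) (use D f in auto)

lemma rho1_hom: "rho1 R \<in> ring_hom RR R"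
proof (rule ring_hom_memI)
  fix f assume f: "f \<in> carrier RR"
  show "rho1 R f \<in> carrier R" unfolding rho1_def using rees_c[OF f] by (auto intro!: finsum_closed)
next
  fix f g assume f: "f \<in> carrier RR" and g: "g \<in> carrier RR"
  define P where "P = {n. f n \<noteq> \<zero>}"
  define Q where "Q = {n. g n \<noteq> \<zero>}"
  have fP: "finite P" "finite Q" unfolding P_def Q_def using rees_fin f g by auto
  have r1g: "rho1 R g \<in> carrier R" unfolding rho1_def by (rule finsum_closed) (use rees_c[OF g] in auto)
  show "rho1 R (f \<oplus>\<^bsub>RR\<^esub> g) = rho1 R f \<oplus> rho1 R g"
  proof -
    have "rho1 R (f \<oplus>\<^bsub>RR\<^esub> g) = finsum R (f \<oplus>\<^bsub>RR\<^esub> g) (P \<union> Q)"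
      by (rule rho1_eq) (use fP rees_c[OF rees_add_closed[OF f g]] in \<open>auto simp: P_def Q_def rees_add\<close>)
    also have "\<dots> = finsum R f (P \<union> Q) \<oplus> finsum R g (P \<union> Q)"
      unfolding rees_add using rees_c f g by (subst finsum_addf) auto
    also have "\<dots> = rho1 R f \<oplus> rho1 R g"
      using rho1_eq[of f "P \<union> Q"] rho1_eq[of g "P \<union> Q"] fP rees_c f g unfolding P_def Q_def by auto
    finally show ?thesis .
  qed
  show "rho1 R (f \<otimes>\<^bsub>RR\<^esub> g) = rho1 R f \<otimes> rho1 R g"
  proof -
    define D where "D = (\<lambda>(a, b). a + b) ` (P \<times> Q)"
    have fD: "finite D" unfolding D_def using fP by simp
    have fgc: "f \<otimes>\<^bsub>RR\<^esub> g \<in> carrier RR" by (rule rees_mult_closed[OF f g])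
    have cfg: "\<And>n m. f n \<otimes> g m \<in> carrier R" using rees_c f g by simp
    have "rho1 R (f \<otimes>\<^bsub>RR\<^esub> g) = finsum R (f \<otimes>\<^bsub>RR\<^esub> g) D"
      by (rule rho1_eq) (use fD rees_c[OF fgc] rees_mult_supp[OF f g] in \<open>auto simp: D_def P_def Q_def\<close>)
    also have "\<dots> = (\<Oplus>k\<in>D. \<Oplus>n\<in>P. f n \<otimes> g (k - n))" unfolding rees_mult P_def by simp
    also have "\<dots> = (\<Oplus>n\<in>P. \<Oplus>k\<in>D. f n \<otimes> g (k - n))"
      by (rule finsum_swap) (use fD fP cfg in auto)
    also have "\<dots> = (\<Oplus>n\<in>P. f n \<otimes> rho1 R g)"
    proof (rule finsum_cong')
      show "P = P" ..
      show "(\<lambda>n. f n \<otimes> rho1 R g) \<in> P \<rightarrow> carrier R"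
        using rees_c f r1g by auto
      fix n assume n: "n \<in> P"
      have inj: "inj_on (\<lambda>k. k - n) D" by (rule inj_onI) simp
      have "(\<Oplus>k\<in>D. g (k - n)) = (\<Oplus>m\<in>(\<lambda>k. k - n) ` D. g m)"
        using finsum_reindex[OF _ inj, of g] rees_c[OF g] by (simp add: comp_def)
      also have "\<dots> = rho1 R g"
      proof (rule rho1_eq[symmetric])
        show "\<And>m. g m \<in> carrier R" using rees_c[OF g] .
        show "finite ((\<lambda>k. k - n) ` D)" using fD by simp
        show "{m. g m \<noteq> \<zero>} \<subseteq> (\<lambda>k. k - n) ` D"
        proof
          fix m assume "m \<in> {m. g m \<noteq> \<zero>}"
          then have "(n, m) \<in> P \<times> Q" using n unfolding Q_def by simp
          then have "n + m \<in> D" unfolding D_def by (rule rev_image_eqI) simp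
          then show "m \<in> (\<lambda>k. k - n) ` D" by (rule rev_image_eqI) simp
        qed
      qed
      finally have "(\<Oplus>k\<in>D. g (k - n)) = rho1 R g" .
      then show "(\<Oplus>k\<in>D. f n \<otimes> g (k - n)) = f n \<otimes> rho1 R g"
        using finsum_rdistr[OF fD rees_c[OF f], of "\<lambda>k. g (k - n)" n] rees_c[OF g] by auto
    qed
    also have "\<dots> = (\<Oplus>n\<in>P. f n) \<otimes> rho1 R g"
      using finsum_ldistr[OF fP(1) r1g, of f] rees_c f by auto
    also have "(\<Oplus>n\<in>P. f n) = rho1 R f" unfolding rho1_def P_def by simp
    finally show ?thesis .
  qed
next
  have "rho1 R \<one>\<^bsub>RR\<^esub> = finsum R (\<one>\<^bsub>RR\<^esub>) {0}"
    by (rule rho1_eq) (auto simp: rees_one)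
  also have "\<dots> = \<one>" by (simp add: rees_one finsum_insert)
  finally show "rho1 R \<one>\<^bsub>RR\<^esub> = \<one>" .
qed

end



lemma (in ring) diff_prod_ident:
  assumes "a \<in> carrier R" "b \<in> carrier R" "f \<in> carrier R" "g \<in> carrier R"
  shows "a \<otimes> b \<ominus> f \<otimes> g = a \<otimes> (b \<ominus> g) \<oplus> (a \<ominus> f) \<otimes> g"
  using assms by algebra

lemma (in ring) diff_sum_ident:
  assumes "a \<in> carrier R" "b \<in> carrier R" "x \<in> carrier R" "y \<in> carrier R"
  shows "(x \<oplus> y) \<ominus> (a \<oplus> b) = \<ominus> ((a \<ominus> x) \<oplus> (b \<ominus> y))"
  using assms by algebra

lemma (in ring) finsum_diff:
  assumes A: "finite A" and f: "f \<in> A \<rightarrow> carrier R" and g: "g \<in> A \<rightarrow> carrier R"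
  shows "finsum R f A \<ominus> finsum R g A = (\<Oplus>i\<in>A. f i \<ominus> g i)"
proof -
  have c: "(\<lambda>i. f i \<ominus> g i) \<in> A \<rightarrow> carrier R" using f g by auto
  have "(\<Oplus>i\<in>A. f i \<ominus> g i) \<oplus> finsum R g A = (\<Oplus>i\<in>A. (f i \<ominus> g i) \<oplus> g i)"
    using c g by (simp add: finsum_addf)
  also have "\<dots> = finsum R f A"
    by (rule finsum_cong') (use f g in \<open>auto simp: minus_eq a_assoc l_neg Pi_iff\<close>)
  finally have e: "(\<Oplus>i\<in>A. f i \<ominus> g i) \<oplus> finsum R g A = finsum R f A" .
  show ?thesis unfolding e[symmetric] using c g by (simp add: minus_eq a_assoc r_neg)
qed


context filt
begin

abbreviation GR where "GR \<equiv> gr_ring R w"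

lemma gr_carrier: "g \<in> carrier GR \<longleftrightarrow>
   (\<forall>n. \<exists>a\<in>Fl R w n. g n = Fl R w (n + 1) +> a) \<and> finite {n. g n \<noteq> Fl R w (n + 1)}"
  by (simp add: gr_ring_def)

lemma gr_mult: "g \<otimes>\<^bsub>GR\<^esub> h = (\<lambda>k. Fl R w (k + 1) +>
   finsum R (\<lambda>n. gr_rep R w g n \<otimes> gr_rep R w h (k - n)) {n. g n \<noteq> Fl R w (n + 1)})"
  by (simp add: gr_ring_def)

lemma gr_add: "g \<oplus>\<^bsub>GR\<^esub> h = (\<lambda>n. Fl R w (n + 1) +> (gr_rep R w g n \<oplus> gr_rep R w h n))"
  by (simp add: gr_ring_def)

lemma gr_one: "\<one>\<^bsub>GR\<^esub> = (\<lambda>n. Fl R w (n + 1) +> (if n = 0 then \<one> else \<zero>))"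
  by (simp add: gr_ring_def)

lemma gr_zero: "\<zero>\<^bsub>GR\<^esub> = (\<lambda>n. Fl R w (n + 1))"
  by (simp add: gr_ring_def)

lemma gr_rep_prop:
  assumes g: "g \<in> carrier GR"
  shows "gr_rep R w g n \<in> Fl R w n \<and> g n = Fl R w (n + 1) +> gr_rep R w g n"
proof -
  have "\<exists>a. a \<in> Fl R w n \<and> g n = Fl R w (n + 1) +> a" using g unfolding gr_carrier by blast
  then show ?thesis unfolding gr_rep_def by (rule someI_ex)
qed

lemma rho2_app: "rho2 R w f n = Fl R w (n + 1) +> f n"
  by (simp add: rho2_def)

lemma rho2_closed:
  assumes f: "f \<in> carrier RR"
  shows "rho2 R w f \<in> carrier GR"
  unfolding gr_carrier
proof
  show "\<forall>n. \<exists>a\<in>Fl R w n. rho2 R w f n = Fl R w (n + 1) +> a"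
    using rees_Fl[OF f] by (auto simp: rho2_app)
  have "{n. rho2 R w f n \<noteq> Fl R w (n + 1)} \<subseteq> {n. f n \<noteq> \<zero>}"
    using coset_self[OF Fl_zero] by (auto simp: rho2_app)
  then show "finite {n. rho2 R w f n \<noteq> Fl R w (n + 1)}" using rees_fin[OF f] by (rule finite_subset)
qed

lemma rep_rho2:
  assumes f: "f \<in> carrier RR"
  shows "gr_rep R w (rho2 R w f) n \<ominus> f n \<in> Fl R w (n + 1)"
proof -
  have p: "gr_rep R w (rho2 R w f) n \<in> Fl R w n"
      "Fl R w (n + 1) +> f n = Fl R w (n + 1) +> gr_rep R w (rho2 R w f) n"
    using gr_rep_prop[OF rho2_closed[OF f], of n] by (auto simp: rho2_app)
  then show ?thesis using coset_eq[OF Fl_carrier[OF p(1)] rees_c[OF f, of n], of "n + 1"] by simp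
qed

lemma rho2_zero_iff:
  assumes f: "f \<in> carrier RR"
  shows "rho2 R w f = \<zero>\<^bsub>GR\<^esub> \<longleftrightarrow> (\<forall>n. f n \<in> Fl R w (n + 1))"
proof -
  have "rho2 R w f = \<zero>\<^bsub>GR\<^esub> \<longleftrightarrow> (\<forall>n. Fl R w (n + 1) +> f n = Fl R w (n + 1))"
    unfolding gr_zero by (auto simp: rho2_app fun_eq_iff)
  also have "\<dots> \<longleftrightarrow> (\<forall>n. f n \<in> Fl R w (n + 1))" using coset_zero_iff rees_c[OF f] by blast
  finally show ?thesis .
qed

lemma rho2_hom: "rho2 R w \<in> ring_hom RR GR"
proof (rule ring_hom_memI)
  fix f assume f: "f \<in> carrier RR"
  show "rho2 R w f \<in> carrier GR" by (rule rho2_closed[OF f])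
next
  fix f g assume f: "f \<in> carrier RR" and g: "g \<in> carrier RR"
  show "rho2 R w (f \<oplus>\<^bsub>RR\<^esub> g) = rho2 R w f \<oplus>\<^bsub>GR\<^esub> rho2 R w g"
  proof
    fix n
    let ?a = "gr_rep R w (rho2 R w f) n" and ?b = "gr_rep R w (rho2 R w g) n"
    have ab: "?a \<in> carrier R" "?b \<in> carrier R"
      using gr_rep_prop[OF rho2_closed[OF f], of n] gr_rep_prop[OF rho2_closed[OF g], of n] Fl_carrier by auto
    have "(f n \<oplus> g n) \<ominus> (?a \<oplus> ?b) = \<ominus> ((?a \<ominus> f n) \<oplus> (?b \<ominus> g n))"
      by (rule diff_sum_ident) (use ab rees_c f g in auto)
    also have "\<dots> \<in> Fl R w (n + 1)" using rep_rho2[OF f] rep_rho2[OF g] by (intro Fl_neg Fl_add)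
    finally have "Fl R w (n + 1) +> (f n \<oplus> g n) = Fl R w (n + 1) +> (?a \<oplus> ?b)"
      using coset_eq ab rees_c f g by simp
    then show "rho2 R w (f \<oplus>\<^bsub>RR\<^esub> g) n = (rho2 R w f \<oplus>\<^bsub>GR\<^esub> rho2 R w g) n"
      by (simp add: rho2_app rees_add gr_add)
  qed
  show "rho2 R w (f \<otimes>\<^bsub>RR\<^esub> g) = rho2 R w f \<otimes>\<^bsub>GR\<^esub> rho2 R w g"
  proof
    fix k
    define P where "P = {n. f n \<noteq> \<zero>}"
    define Sg where "Sg = {n. rho2 R w f n \<noteq> Fl R w (n + 1)}"
    define a where "a n = gr_rep R w (rho2 R w f) n" for n
    define b where "b n = gr_rep R w (rho2 R w g) n" for n
    have aF: "\<And>n. a n \<in> Fl R w n" unfolding a_def using gr_rep_prop[OF rho2_closed[OF f]] by blast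
    have bF: "\<And>n. b n \<in> Fl R w n" unfolding b_def using gr_rep_prop[OF rho2_closed[OF g]] by blast
    have ac: "\<And>n. a n \<in> carrier R" and bc: "\<And>n. b n \<in> carrier R" using aF bF Fl_carrier by auto
    have fP: "finite P" unfolding P_def using rees_fin[OF f] .
    have SgP: "Sg \<subseteq> P" unfolding Sg_def P_def using coset_self[OF Fl_zero] by (auto simp: rho2_app)
    define x where "x n = (if n \<in> Sg then a n \<otimes> b (k - n) else \<zero>)" for n
    have xc: "\<And>n. x n \<in> carrier R" unfolding x_def using ac bc by simp
    have yc: "\<And>n. f n \<otimes> g (k - n) \<in> carrier R" using rees_c f g by simp
    have X: "finsum R (\<lambda>n. a n \<otimes> b (k - n)) Sg = finsum R x P"
      by (rule add.finprod_mono_neutral_cong_left) (use fP SgP xc in \<open>auto simp: x_def\<close>)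
    have Y: "(f \<otimes>\<^bsub>RR\<^esub> g) k = finsum R (\<lambda>n. f n \<otimes> g (k - n)) P" unfolding rees_mult P_def by simp
    have "finsum R (\<lambda>n. f n \<otimes> g (k - n)) P \<ominus> finsum R x P = (\<Oplus>n\<in>P. f n \<otimes> g (k - n) \<ominus> x n)"
      by (rule finsum_diff) (use fP xc yc in auto)
    also have "\<dots> \<in> Fl R w (k + 1)"
    proof (rule Fl_finsum)
      fix n assume n: "n \<in> P"
      show "f n \<otimes> g (k - n) \<ominus> x n \<in> Fl R w (k + 1)"
      proof (cases "n \<in> Sg")
        case True
        have "f n \<otimes> g (k - n) \<ominus> x n = \<ominus> (a n \<otimes> b (k - n) \<ominus> f n \<otimes> g (k - n))"
          unfolding x_def using True ac bc yc by (simp add: minus_eq minus_add a_comm)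
        also have "a n \<otimes> b (k - n) \<ominus> f n \<otimes> g (k - n) = a n \<otimes> (b (k - n) \<ominus> g (k - n)) \<oplus> (a n \<ominus> f n) \<otimes> g (k - n)"
          by (rule diff_prod_ident) (use ac bc rees_c f g in auto)
        also have "\<ominus> \<dots> \<in> Fl R w (k + 1)"
        proof (intro Fl_neg Fl_add)
          have "a n \<otimes> (b (k - n) \<ominus> g (k - n)) \<in> Fl R w (n + (k - n + 1))"
            using Fl_mult[OF aF[of n] rep_rho2[OF g, of "k - n"]] unfolding b_def by simp
          then show "a n \<otimes> (b (k - n) \<ominus> g (k - n)) \<in> Fl R w (k + 1)" by (simp add: algebra_simps)
          have "(a n \<ominus> f n) \<otimes> g (k - n) \<in> Fl R w (n + 1 + (k - n))"
            using Fl_mult[OF rep_rho2[OF f, of n] rees_Fl[OF g, of "k - n"]] unfolding a_def by simp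
          then show "(a n \<ominus> f n) \<otimes> g (k - n) \<in> Fl R w (k + 1)" by (simp add: algebra_simps)
        qed
        finally show ?thesis .
      next
        case False
        then have "Fl R w (n + 1) +> f n = Fl R w (n + 1)" unfolding Sg_def by (simp add: rho2_app)
        then have fn: "f n \<in> Fl R w (n + 1)" using coset_zero_iff rees_c[OF f] by blast
        have "f n \<otimes> g (k - n) \<in> Fl R w (n + 1 + (k - n))" by (rule Fl_mult[OF fn rees_Fl[OF g]])
        then show ?thesis unfolding x_def using False yc by (simp add: minus_eq algebra_simps)
      qed
    qed
    finally have "Fl R w (k + 1) +> (f \<otimes>\<^bsub>RR\<^esub> g) k = Fl R w (k + 1) +> finsum R (\<lambda>n. a n \<otimes> b (k - n)) Sg"
      unfolding X Y using coset_eq[of "finsum R (\<lambda>n. f n \<otimes> g (k - n)) P" "finsum R x P"] xc yc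
      by (auto intro!: finsum_closed)
    then show "rho2 R w (f \<otimes>\<^bsub>RR\<^esub> g) k = (rho2 R w f \<otimes>\<^bsub>GR\<^esub> rho2 R w g) k"
      unfolding gr_mult rho2_app[of "f \<otimes>\<^bsub>RR\<^esub> g"] a_def b_def Sg_def by simp
  qed
next
  show "rho2 R w \<one>\<^bsub>RR\<^esub> = \<one>\<^bsub>GR\<^esub>" by (simp add: rho2_def rees_one gr_one)
qed

end




lemma (in monoid) units_comm_inv:
  assumes u: "u \<in> Units G" and c: "c \<in> carrier G" and cu: "c \<otimes> u = u \<otimes> c"
  shows "inv u \<otimes> c = c \<otimes> inv u"
proof -
  have uc: "u \<in> carrier G" "inv u \<in> carrier G" using u by auto
  have "c \<otimes> inv u = inv u \<otimes> (u \<otimes> (c \<otimes> inv u))" by (rule units_lr(2)[OF u m_closed[OF c uc(2)], symmetric])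
  also have "u \<otimes> (c \<otimes> inv u) = (c \<otimes> u) \<otimes> inv u" using uc c cu by (simp add: m_assoc)
  also have "\<dots> = c" by (rule units_lr(3)[OF u c])
  finally show ?thesis by simp
qed

lemma hom_zero_gen:
  assumes h: "h \<in> ring_hom A B" and B: "ring B" and z: "\<zero>\<^bsub>A\<^esub> \<in> carrier A" "\<zero>\<^bsub>A\<^esub> \<oplus>\<^bsub>A\<^esub> \<zero>\<^bsub>A\<^esub> = \<zero>\<^bsub>A\<^esub>"
  shows "h \<zero>\<^bsub>A\<^esub> = \<zero>\<^bsub>B\<^esub>"
proof -
  interpret B: ring B by (rule B)
  have c: "h \<zero>\<^bsub>A\<^esub> \<in> carrier B" by (rule ring_hom_closed[OF h z(1)])
  have "h \<zero>\<^bsub>A\<^esub> \<oplus>\<^bsub>B\<^esub> h \<zero>\<^bsub>A\<^esub> = h \<zero>\<^bsub>A\<^esub> \<oplus>\<^bsub>B\<^esub> \<zero>\<^bsub>B\<^esub>"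
    using ring_hom_add[OF h z(1) z(1)] z(2) c by simp
  then show ?thesis using c by simp
qed

context filt
begin

lemma one_ne_zero:
  assumes mc: "mult_closed GR T" and z: "\<zero>\<^bsub>GR\<^esub> \<notin> T"
  shows "\<one> \<noteq> \<zero>"
proof
  assume e: "\<one> = \<zero>"
  have z1: "\<And>n. (if n = 0 then \<one> else \<zero>) = \<zero>" using e by simp
  have "\<one>\<^bsub>GR\<^esub> = \<zero>\<^bsub>GR\<^esub>" unfolding gr_one gr_zero z1 using coset_self[OF Fl_zero] by simp
  moreover have "\<one>\<^bsub>GR\<^esub> \<in> T" using mc unfolding mult_closed_def by simp
  ultimately show False using z by simp
qed

lemma t_carrier: "rees_t R \<in> carrier RR"
proof (rule rees_carrierI)
  fix n show "rees_t R n \<in> Fl R w n"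
    unfolding rees_t_def using Fl_mono[of "-1" 0, OF _ one_Fl0] Fl_zero by simp
next
  have "{n. rees_t R n \<noteq> \<zero>} \<subseteq> {-1}" unfolding rees_t_def by auto
  then show "finite {n. rees_t R n \<noteq> \<zero>}" by (rule finite_subset) simp
qed

lemma t_mult_left:
  assumes one: "\<one> \<noteq> \<zero>" and y: "y \<in> carrier RR"
  shows "rees_t R \<otimes>\<^bsub>RR\<^esub> y = (\<lambda>k. y (k + 1))"
proof
  fix k
  have s: "{n. rees_t R n \<noteq> \<zero>} = {-1}" unfolding rees_t_def using one by auto
  show "(rees_t R \<otimes>\<^bsub>RR\<^esub> y) k = y (k + 1)"
    unfolding rees_mult s using rees_c[OF y] by (simp add: finsum_insert rees_t_def)
qed

lemma t_mult_right:
  assumes s: "s \<in> carrier RR"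
  shows "s \<otimes>\<^bsub>RR\<^esub> rees_t R = (\<lambda>k. s (k + 1))"
proof
  fix k
  have e: "(s \<otimes>\<^bsub>RR\<^esub> rees_t R) k = (\<Oplus>n\<in>{n. s n \<noteq> \<zero>}. if n = k + 1 then s n else \<zero>)"
    unfolding rees_mult
    by (rule finsum_cong') (use rees_c[OF s] in \<open>auto simp: rees_t_def\<close>)
  show "(s \<otimes>\<^bsub>RR\<^esub> rees_t R) k = s (k + 1)"
  proof (cases "s (k + 1) = \<zero>")
    case True
    have "(\<Oplus>n\<in>{n. s n \<noteq> \<zero>}. if n = k + 1 then s n else \<zero>) = \<zero>"
      by (rule add.finprod_one_eqI) (use True in auto)
    then show ?thesis using e True by simp
  next
    case False
    have "(\<Oplus>n\<in>{n. s n \<noteq> \<zero>}. if n = k + 1 then s n else \<zero>) = s (k + 1)"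
      by (rule add.finprod_singleton_swap) (use False rees_fin[OF s] rees_c[OF s] in auto)
    then show ?thesis using e by simp
  qed
qed

lemma t_comm:
  assumes one: "\<one> \<noteq> \<zero>" and s: "s \<in> carrier RR"
  shows "rees_t R \<otimes>\<^bsub>RR\<^esub> s = s \<otimes>\<^bsub>RR\<^esub> rees_t R"
  using t_mult_left[OF one s] t_mult_right[OF s] by simp

lemma rho1_t: "rho1 R (rees_t R) = \<one>"
proof -
  have "rho1 R (rees_t R) = finsum R (rees_t R) {-1}"
    by (rule rho1_eq) (auto simp: rees_t_def)
  then show ?thesis by (simp add: rees_t_def finsum_insert)
qed

lemma rho2_t: "rho2 R w (rees_t R) = \<zero>\<^bsub>GR\<^esub>"
  by (subst rho2_zero_iff[OF t_carrier]) (simp add: rees_t_def one_Fl0 Fl_zero)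

lemma rees_homog_mult:
  assumes x: "rees_homog R w x d" and y: "rees_homog R w y e"
  shows "rees_homog R w (x \<otimes>\<^bsub>RR\<^esub> y) (d + e)"
  unfolding rees_homog_def
proof
  have xc: "x \<in> carrier RR" and yc: "y \<in> carrier RR" using x y unfolding rees_homog_def by auto
  show "x \<otimes>\<^bsub>RR\<^esub> y \<in> carrier RR" by (rule rees_mult_closed[OF xc yc])
  show "\<forall>n. n \<noteq> d + e \<longrightarrow> (x \<otimes>\<^bsub>RR\<^esub> y) n = \<zero>"
  proof (intro allI impI)
    fix k assume k: "k \<noteq> d + e"
    have "\<And>n. x n \<noteq> \<zero> \<Longrightarrow> x n \<otimes> y (k - n) = \<zero>"
    proof -
      fix n assume "x n \<noteq> \<zero>"
      then have "n = d" using x unfolding rees_homog_def by auto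
      then have "y (k - n) = \<zero>" using y k unfolding rees_homog_def by auto
      then show "x n \<otimes> y (k - n) = \<zero>" using rees_c[OF xc] by simp
    qed
    then have "(\<Oplus>n\<in>{n. x n \<noteq> \<zero>}. x n \<otimes> y (k - n)) = \<zero>" by (intro add.finprod_one_eqI) simp
    then show "(x \<otimes>\<^bsub>RR\<^esub> y) k = \<zero>" unfolding rees_mult by simp
  qed
qed

lemma rho2_homog:
  assumes f: "rees_homog R w f e"
  shows "gr_homog R w (rho2 R w f) e"
  using f rho2_closed coset_self[OF Fl_zero] unfolding rees_homog_def gr_homog_def by (auto simp: rho2_app)

lemma St_mult_closed:
  assumes mc: "mult_closed GR T"
  shows "mult_closed RR (St_set R w T)"
  unfolding mult_closed_def
proof (intro conjI ballI)
  show "St_set R w T \<subseteq> carrier RR" unfolding St_set_def by auto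
  have "rees_homog R w \<one>\<^bsub>RR\<^esub> 0" unfolding rees_homog_def using rees_one_closed by (simp add: rees_one)
  moreover have "rho2 R w \<one>\<^bsub>RR\<^esub> \<in> T" using ring_hom_one[OF rho2_hom] mc unfolding mult_closed_def by simp
  ultimately show "\<one>\<^bsub>RR\<^esub> \<in> St_set R w T" unfolding St_set_def using rees_one_closed by blast
  fix x y assume x: "x \<in> St_set R w T" and y: "y \<in> St_set R w T"
  have xc: "x \<in> carrier RR" and yc: "y \<in> carrier RR" using x y unfolding St_set_def by auto
  obtain d e where "rees_homog R w x d" "rees_homog R w y e" using x y unfolding St_set_def by auto
  then have "rees_homog R w (x \<otimes>\<^bsub>RR\<^esub> y) (d + e)" by (rule rees_homog_mult)
  moreover have "rho2 R w (x \<otimes>\<^bsub>RR\<^esub> y) \<in> T"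
    using ring_hom_mult[OF rho2_hom xc yc] x y mc unfolding mult_closed_def St_set_def by auto
  ultimately show "x \<otimes>\<^bsub>RR\<^esub> y \<in> St_set R w T"
    unfolding St_set_def using rees_mult_closed[OF xc yc] by blast
qed

lemma rho1_St:
  assumes s: "s \<in> St_set R w T" and z: "\<zero>\<^bsub>GR\<^esub> \<notin> T"
  shows "rho1 R s \<in> S_set R w T"
proof -
  have sc: "s \<in> carrier RR" and sT: "rho2 R w s \<in> T" using s unfolding St_set_def by auto
  obtain d where hd: "rees_homog R w s d" using s unfolding St_set_def by auto
  have sn: "\<And>n. n \<noteq> d \<Longrightarrow> s n = \<zero>" using hd unfolding rees_homog_def by auto
  have r1: "rho1 R s = s d"
  proof -
    have "rho1 R s = finsum R s {d}" by (rule rho1_eq) (use rees_c[OF sc] sn in auto)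
    then show ?thesis using rees_c[OF sc] by (simp add: finsum_insert)
  qed
  have nz: "rho2 R w s \<noteq> \<zero>\<^bsub>GR\<^esub>" using sT z by auto
  have notF: "s d \<notin> Fl R w (d + 1)"
  proof
    assume a: "s d \<in> Fl R w (d + 1)"
    have "\<forall>n. s n \<in> Fl R w (n + 1)" using a sn Fl_zero by (metis)
    then show False using nz rho2_zero_iff[OF sc] by simp
  qed
  have sdF: "s d \<in> Fl R w d" by (rule rees_Fl[OF sc])
  have sdc: "s d \<in> carrier R" by (rule rees_c[OF sc])
  have wd: "w (s d) = ereal (real_of_int d)"
  proof -
    have ge: "ereal (real_of_int d) \<le> w (s d)" using sdF unfolding Fl_mem by simp
    have nge: "\<not> ereal (real_of_int (d + 1)) \<le> w (s d)" using notF sdc unfolding Fl_mem by simp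
    from w_int[OF sdc] show ?thesis
    proof
      assume "w (s d) = \<infinity>" then show ?thesis using nge by simp
    next
      assume "\<exists>m::int. w (s d) = ereal (real_of_int m)"
      then obtain m :: int where m: "w (s d) = ereal (real_of_int m)" by blast
      have "d \<le> m" using ge m by simp
      moreover have "\<not> d + 1 \<le> m" using nge m by simp
      ultimately show ?thesis using m by simp
    qed
  qed
  have ge: "gr_elt R w (s d) = rho2 R w s"
  proof
    fix n show "gr_elt R w (s d) n = rho2 R w s n"
      unfolding gr_elt_def rho2_app wd using sn[of n] coset_self[OF Fl_zero] by auto
  qed
  have "s d \<noteq> \<zero>" using notF Fl_zero by auto
  then show ?thesis unfolding S_set_def r1 using sdc ge sT by simp
qed

lemma t_minus_one:
  assumes one: "\<one> \<noteq> \<zero>" and r: "r \<in> carrier RR" and r0: "rho1 R r = \<zero>"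
  shows "\<exists>y\<in>carrier RR. r \<oplus>\<^bsub>RR\<^esub> y = rees_t R \<otimes>\<^bsub>RR\<^esub> y"
proof -
  define P where "P = {n. r n \<noteq> \<zero>}"
  have fP: "finite P" unfolding P_def using rees_fin[OF r] .
  define A where "A k = {n \<in> P. k \<le> n}" for k
  have fA: "\<And>k. finite (A k)" unfolding A_def using fP by simp
  define y where "y k = \<ominus> finsum R r (A k)" for k
  have rc: "\<And>n. r n \<in> carrier R" using rees_c[OF r] .
  have sc: "\<And>k. finsum R r (A k) \<in> carrier R" using rc by (auto intro!: finsum_closed)
  have yF: "\<And>k. y k \<in> Fl R w k"
    unfolding y_def
  proof (rule Fl_neg, rule Fl_finsum)
    fix k n assume "n \<in> A k"
    then have "k \<le> n" unfolding A_def by simp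
    then show "r n \<in> Fl R w k" using Fl_mono rees_Fl[OF r] by blast
  qed
  have yfin: "finite {k. y k \<noteq> \<zero>}"
  proof (cases "P = {}")
    case True
    then have "\<And>k. y k = \<zero>" unfolding y_def A_def by (simp add: finsum_empty)
    then show ?thesis by simp
  next
    case False
    have "{k. y k \<noteq> \<zero>} \<subseteq> {Min P <.. Max P}"
    proof
      fix k assume k: "k \<in> {k. y k \<noteq> \<zero>}"
      have 1: "Min P < k"
      proof (rule ccontr)
        assume "\<not> Min P < k"
        then have "A k = P" unfolding A_def using Min_le[OF fP] by force
        then have "y k = \<ominus> rho1 R r" unfolding y_def rho1_def P_def by simp
        then show False using k r0 by simp
      qed
      have 2: "k \<le> Max P"
      proof (rule ccontr)
        assume "\<not> k \<le> Max P"
        then have "A k = {}" unfolding A_def using Max_ge[OF fP] by force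
        then have "y k = \<zero>" unfolding y_def by (simp add: finsum_empty)
        then show False using k by simp
      qed
      show "k \<in> {Min P <.. Max P}" using 1 2 by simp
    qed
    then show ?thesis by (rule finite_subset) simp
  qed
  have yc: "y \<in> carrier RR" by (rule rees_carrierI[OF yF yfin])
  have rec: "\<And>k. r k \<oplus> y k = y (k + 1)"
  proof -
    fix k
    show "r k \<oplus> y k = y (k + 1)"
    proof (cases "k \<in> P")
      case True
      have "A k = insert k (A (k + 1))" unfolding A_def using True by auto
      moreover have "k \<notin> A (k + 1)" unfolding A_def by simp
      ultimately have "finsum R r (A k) = r k \<oplus> finsum R r (A (k + 1))"
        using fA rc by (simp add: finsum_insert)
      then have "y k = \<ominus> r k \<oplus> y (k + 1)" unfolding y_def using rc sc by (simp add: minus_add)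
      then show ?thesis using rc sc unfolding y_def by (simp add: a_assoc[symmetric] r_neg)
    next
      case False
      then have rk: "r k = \<zero>" unfolding P_def by simp
      have "A k = A (k + 1)" unfolding A_def using False by (auto simp: order_le_less)
      then show ?thesis unfolding y_def using rk sc by simp
    qed
  qed
  have "r \<oplus>\<^bsub>RR\<^esub> y = rees_t R \<otimes>\<^bsub>RR\<^esub> y"
    unfolding t_mult_left[OF one yc] rees_add using rec by simp
  then show ?thesis using yc by blast
qed

lemma lift_homog:
  assumes g: "gr_homog R w g d"
  shows "\<exists>s. rees_homog R w s d \<and> rho2 R w s = g"
proof -
  have gc: "g \<in> carrier GR" and gn: "\<And>n. n \<noteq> d \<Longrightarrow> g n = Fl R w (n + 1)"
    using g unfolding gr_homog_def by auto
  define s where "s n = (if n = d then gr_rep R w g d else \<zero>)" for n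
  have sc: "s \<in> carrier RR"
  proof (rule rees_carrierI)
    fix n show "s n \<in> Fl R w n" unfolding s_def using gr_rep_prop[OF gc, of d] Fl_zero by auto
  next
    have "{n. s n \<noteq> \<zero>} \<subseteq> {d}" unfolding s_def by auto
    then show "finite {n. s n \<noteq> \<zero>}" by (rule finite_subset) simp
  qed
  have "rees_homog R w s d" unfolding rees_homog_def using sc by (simp add: s_def)
  moreover have "rho2 R w s = g"
  proof
    fix n show "rho2 R w s n = g n"
    proof (cases "n = d")
      case True
      then show ?thesis unfolding rho2_app s_def using gr_rep_prop[OF gc, of d] by simp
    next
      case False
      then show ?thesis unfolding rho2_app s_def using gn[OF False] coset_self[OF Fl_zero] by simp
    qed
  qed
  ultimately show ?thesis by blast
qed

lemma shift_t:
  assumes one: "\<one> \<noteq> \<zero>" and z: "z \<in> carrier RR" and zF: "\<And>n. z n \<in> Fl R w (n + 1)"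
  shows "\<exists>y\<in>carrier RR. rees_t R \<otimes>\<^bsub>RR\<^esub> y = z"
proof -
  define y where "y m = z (m - 1)" for m
  have yc: "y \<in> carrier RR"
  proof (rule rees_carrierI)
    fix m show "y m \<in> Fl R w m" unfolding y_def using zF[of "m - 1"] by simp
  next
    have sub: "{m. y m \<noteq> \<zero>} \<subseteq> (\<lambda>n. n + 1) ` {n. z n \<noteq> \<zero>}"
    proof
      fix m assume "m \<in> {m. y m \<noteq> \<zero>}"
      then have "m - 1 \<in> {n. z n \<noteq> \<zero>}" unfolding y_def by simp
      then show "m \<in> (\<lambda>n. n + 1) ` {n. z n \<noteq> \<zero>}" by (rule rev_image_eqI) simp
    qed
    show "finite {m. y m \<noteq> \<zero>}" using rees_fin[OF z] by (intro finite_subset[OF sub] finite_imageI)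
  qed
  have "rees_t R \<otimes>\<^bsub>RR\<^esub> y = z" unfolding t_mult_left[OF one yc] y_def by simp
  then show ?thesis using yc by blast
qed

end




context filt
begin

lemma main:
  assumes mcT: "mult_closed GR T"
    and homT: "\<forall>g\<in>T. \<exists>d. gr_homog R w g d"
    and zT: "\<zero>\<^bsub>GR\<^esub> \<notin> T"
    and fT: "left_ring_of_fractions GR T QT alpha"
    and fS: "left_ring_of_fractions R (S_set R w T) QS phi"
    and fSt: "left_ring_of_fractions RR (St_set R w T) QSt lam"
    and nzd: "\<forall>s\<in>S_set R w T. \<forall>r\<in>carrier R. r \<noteq> \<zero>\<^bsub>R\<^esub> \<longrightarrow> s \<otimes>\<^bsub>R\<^esub> r \<noteq> \<zero>\<^bsub>R\<^esub>"
  shows "(\<exists>rho1' \<in> ring_hom QSt QS.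
            (\<forall>s\<in>St_set R w T. \<forall>r\<in>carrier (rees_ring R w).
               rho1' (inv\<^bsub>QSt\<^esub> (lam s) \<otimes>\<^bsub>QSt\<^esub> lam r)
                 = inv\<^bsub>QS\<^esub> (phi (rho1 R s)) \<otimes>\<^bsub>QS\<^esub> phi (rho1 R r)) \<and>
            a_kernel QSt QS rho1'
              = {(lam (rees_t R) \<ominus>\<^bsub>QSt\<^esub> \<one>\<^bsub>QSt\<^esub>) \<otimes>\<^bsub>QSt\<^esub> q | q. q \<in> carrier QSt})
       \<and> (\<exists>rho2' \<in> ring_hom QSt QT.
            (\<forall>s\<in>St_set R w T. \<forall>r\<in>carrier (rees_ring R w).
               rho2' (inv\<^bsub>QSt\<^esub> (lam s) \<otimes>\<^bsub>QSt\<^esub> lam r)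
                 = inv\<^bsub>QT\<^esub> (alpha (rho2 R w s)) \<otimes>\<^bsub>QT\<^esub> alpha (rho2 R w r)) \<and>
            a_kernel QSt QT rho2'
              = {lam (rees_t R) \<otimes>\<^bsub>QSt\<^esub> q | q. q \<in> carrier QSt} \<and>
            (\<forall>n. rho2' ` frac_deg_part QSt lam (St_set R w T) (rees_homog R w) n
                   \<subseteq> frac_deg_part QT alpha T (gr_homog R w) n))"
proof -
  have one: "\<one> \<noteq> \<zero>" by (rule one_ne_zero[OF mcT zT])
  note LT = fT[unfolded left_ring_of_fractions_def]
  note LS = fS[unfolded left_ring_of_fractions_def]
  note LSt = fSt[unfolded left_ring_of_fractions_def]
  have rQT: "ring QT" using LT by (rule conjunct1)
  have rQS: "ring QS" using LS by (rule conjunct1)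
  have rQSt: "ring QSt" using LSt by (rule conjunct1)
  interpret QT: ring QT by (rule rQT)
  interpret QS: ring QS by (rule rQS)
  interpret QSt: ring QSt by (rule rQSt)
  have alpha: "alpha \<in> ring_hom GR QT" using LT by (rule conjunct2[THEN conjunct1])
  have phi: "phi \<in> ring_hom R QS" using LS by (rule conjunct2[THEN conjunct1])
  have lam: "lam \<in> ring_hom RR QSt" using LSt by (rule conjunct2[THEN conjunct1])
  have alphaU: "\<And>g. g \<in> T \<Longrightarrow> alpha g \<in> Units QT"
    using LT[THEN conjunct2, THEN conjunct2, THEN conjunct1] by (rule bspec)
  have phiU: "\<And>s. s \<in> S_set R w T \<Longrightarrow> phi s \<in> Units QS"
    using LS[THEN conjunct2, THEN conjunct2, THEN conjunct1] by (rule bspec)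
  have lamU: "\<And>s. s \<in> St_set R w T \<Longrightarrow> lam s \<in> Units QSt"
    using LSt[THEN conjunct2, THEN conjunct2, THEN conjunct1] by (rule bspec)
  have repSt: "\<And>q. q \<in> carrier QSt \<Longrightarrow> \<exists>s\<in>St_set R w T. \<exists>r\<in>carrier RR. q = inv\<^bsub>QSt\<^esub> (lam s) \<otimes>\<^bsub>QSt\<^esub> lam r"
    using LSt[THEN conjunct2, THEN conjunct2, THEN conjunct2, THEN conjunct1] by (rule bspec)
  have kerS: "\<exists>s\<in>S_set R w T. s \<otimes> r = \<zero>" if "r \<in> carrier R" "phi r = \<zero>\<^bsub>QS\<^esub>" for r
    using LS[THEN conjunct2, THEN conjunct2, THEN conjunct2, THEN conjunct2] that by simp
  have kerT: "\<exists>s\<in>T. s \<otimes>\<^bsub>GR\<^esub> g = \<zero>\<^bsub>GR\<^esub>" if "g \<in> carrier GR" "alpha g = \<zero>\<^bsub>QT\<^esub>" for g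
    using LT[THEN conjunct2, THEN conjunct2, THEN conjunct2, THEN conjunct2] that by simp
  have mcSt: "mult_closed RR (St_set R w T)" by (rule St_mult_closed[OF mcT])
  have StC: "\<And>s. s \<in> St_set R w T \<Longrightarrow> s \<in> carrier RR" unfolding St_set_def by simp
  have oneSt: "\<one>\<^bsub>RR\<^esub> \<in> St_set R w T" using mcSt unfolding mult_closed_def by simp
  have lc: "\<And>f. f \<in> carrier RR \<Longrightarrow> lam f \<in> carrier QSt" by (rule ring_hom_closed[OF lam])
  have lm: "\<And>f g. f \<in> carrier RR \<Longrightarrow> g \<in> carrier RR \<Longrightarrow> lam (f \<otimes>\<^bsub>RR\<^esub> g) = lam f \<otimes>\<^bsub>QSt\<^esub> lam g"
    by (rule ring_hom_mult[OF lam])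
  have la: "\<And>f g. f \<in> carrier RR \<Longrightarrow> g \<in> carrier RR \<Longrightarrow> lam (f \<oplus>\<^bsub>RR\<^esub> g) = lam f \<oplus>\<^bsub>QSt\<^esub> lam g"
    by (rule ring_hom_add[OF lam])
  have l1: "lam \<one>\<^bsub>RR\<^esub> = \<one>\<^bsub>QSt\<^esub>" by (rule ring_hom_one[OF lam])
  have lamform: "\<And>f. f \<in> carrier RR \<Longrightarrow> lam f = inv\<^bsub>QSt\<^esub> (lam \<one>\<^bsub>RR\<^esub>) \<otimes>\<^bsub>QSt\<^esub> lam f"
    using l1 lc by simp
  have tc: "rees_t R \<in> carrier RR" by (rule t_carrier)
  have ltc: "lam (rees_t R) \<in> carrier QSt" by (rule lc[OF tc])
  have tcomm: "\<And>f. f \<in> carrier RR \<Longrightarrow> lam (rees_t R) \<otimes>\<^bsub>QSt\<^esub> lam f = lam f \<otimes>\<^bsub>QSt\<^esub> lam (rees_t R)"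
    using t_comm[OF one] lm tc by metis
  have tinv: "\<And>s. s \<in> St_set R w T \<Longrightarrow>
      inv\<^bsub>QSt\<^esub> (lam s) \<otimes>\<^bsub>QSt\<^esub> lam (rees_t R) = lam (rees_t R) \<otimes>\<^bsub>QSt\<^esub> inv\<^bsub>QSt\<^esub> (lam s)"
    using QSt.units_comm_inv[OF lamU ltc] tcomm StC by metis

  define psi1 where "psi1 = phi \<circ> rho1 R"
  have psi1: "psi1 \<in> ring_hom RR QS" unfolding psi1_def by (rule ring_hom_trans[OF rho1_hom phi])
  have psi1U: "\<forall>s\<in>St_set R w T. psi1 s \<in> Units QS"
    unfolding psi1_def using rho1_St[OF _ zT] phiU by simp
  obtain h1 where h1: "h1 \<in> ring_hom QSt QS"
    and h1v: "\<forall>s\<in>St_set R w T. \<forall>r\<in>carrier RR.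
       h1 (inv\<^bsub>QSt\<^esub> (lam s) \<otimes>\<^bsub>QSt\<^esub> lam r) = inv\<^bsub>QS\<^esub> (psi1 s) \<otimes>\<^bsub>QS\<^esub> psi1 r"
    using univ_frac[OF fSt rQS psi1 psi1U mcSt rees_add_closed rees_mult_closed rees_zero_closed rees_zero_add rees_neg]
    by blast
  define psi2 where "psi2 = alpha \<circ> rho2 R w"
  have psi2: "psi2 \<in> ring_hom RR QT" unfolding psi2_def by (rule ring_hom_trans[OF rho2_hom alpha])
  have psi2U: "\<forall>s\<in>St_set R w T. psi2 s \<in> Units QT"
    unfolding psi2_def using alphaU unfolding St_set_def by simp
  obtain h2 where h2: "h2 \<in> ring_hom QSt QT"
    and h2v: "\<forall>s\<in>St_set R w T. \<forall>r\<in>carrier RR.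
       h2 (inv\<^bsub>QSt\<^esub> (lam s) \<otimes>\<^bsub>QSt\<^esub> lam r) = inv\<^bsub>QT\<^esub> (psi2 s) \<otimes>\<^bsub>QT\<^esub> psi2 r"
    using univ_frac[OF fSt rQT psi2 psi2U mcSt rees_add_closed rees_mult_closed rees_zero_closed rees_zero_add rees_neg]
    by blast
  have h1lam: "\<And>f. f \<in> carrier RR \<Longrightarrow> h1 (lam f) = psi1 f"
  proof -
    fix f assume f: "f \<in> carrier RR"
    have "h1 (lam f) = inv\<^bsub>QS\<^esub> (psi1 \<one>\<^bsub>RR\<^esub>) \<otimes>\<^bsub>QS\<^esub> psi1 f"
      using lamform[OF f] h1v oneSt f by metis
    then show "h1 (lam f) = psi1 f" using ring_hom_one[OF psi1] ring_hom_closed[OF psi1 f] by simp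
  qed
  have h2lam: "\<And>f. f \<in> carrier RR \<Longrightarrow> h2 (lam f) = psi2 f"
  proof -
    fix f assume f: "f \<in> carrier RR"
    have "h2 (lam f) = inv\<^bsub>QT\<^esub> (psi2 \<one>\<^bsub>RR\<^esub>) \<otimes>\<^bsub>QT\<^esub> psi2 f"
      using lamform[OF f] h2v oneSt f by metis
    then show "h2 (lam f) = psi2 f" using ring_hom_one[OF psi2] ring_hom_closed[OF psi2 f] by simp
  qed
  interpret H1: ring_hom_ring QSt QS h1 by (rule ring_hom_ringI2[OF rQSt rQS h1])
  interpret H2: ring_hom_ring QSt QT h2 by (rule ring_hom_ringI2[OF rQSt rQT h2])

  define c where "c = lam (rees_t R) \<ominus>\<^bsub>QSt\<^esub> \<one>\<^bsub>QSt\<^esub>"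
  have cc: "c \<in> carrier QSt" unfolding c_def using ltc by simp
  have hc: "h1 c = \<zero>\<^bsub>QS\<^esub>"
  proof -
    have "h1 (lam (rees_t R)) = \<one>\<^bsub>QS\<^esub>"
      using h1lam[OF tc] rho1_t ring_hom_one[OF phi] unfolding psi1_def by simp
    then show ?thesis unfolding c_def using ltc by (simp add: QSt.minus_eq QS.minus_eq QS.r_neg)
  qed
  have ker1: "a_kernel QSt QS h1 = {c \<otimes>\<^bsub>QSt\<^esub> q | q. q \<in> carrier QSt}"
  proof (intro equalityI subsetI)
    fix x assume "x \<in> {c \<otimes>\<^bsub>QSt\<^esub> q | q. q \<in> carrier QSt}"
    then obtain q where q: "q \<in> carrier QSt" and x: "x = c \<otimes>\<^bsub>QSt\<^esub> q" by blast
    have "h1 x = \<zero>\<^bsub>QS\<^esub>" unfolding x using cc q hc by simp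
    then show "x \<in> a_kernel QSt QS h1" unfolding a_kernel_def' x using cc q by simp
  next
    fix x assume "x \<in> a_kernel QSt QS h1"
    then have xc: "x \<in> carrier QSt" and hx: "h1 x = \<zero>\<^bsub>QS\<^esub>" unfolding a_kernel_def' by auto
    obtain s r where s: "s \<in> St_set R w T" and r: "r \<in> carrier RR"
      and xe: "x = inv\<^bsub>QSt\<^esub> (lam s) \<otimes>\<^bsub>QSt\<^esub> lam r" using repSt[OF xc] by blast
    have sc: "s \<in> carrier RR" by (rule StC[OF s])
    have u: "psi1 s \<in> Units QS" using psi1U s by blast
    have pr: "psi1 r \<in> carrier QS" by (rule ring_hom_closed[OF psi1 r])
    have "inv\<^bsub>QS\<^esub> (psi1 s) \<otimes>\<^bsub>QS\<^esub> psi1 r = \<zero>\<^bsub>QS\<^esub>" using hx h1v s r xe by simp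
    then have "psi1 s \<otimes>\<^bsub>QS\<^esub> (inv\<^bsub>QS\<^esub> (psi1 s) \<otimes>\<^bsub>QS\<^esub> psi1 r) = \<zero>\<^bsub>QS\<^esub>" using u QS.Units_closed[OF u] by simp
    then have p0: "psi1 r = \<zero>\<^bsub>QS\<^esub>" using QS.units_lr(1)[OF u pr] by simp
    have r1c: "rho1 R r \<in> carrier R" by (rule ring_hom_closed[OF rho1_hom r])
    have r10: "rho1 R r = \<zero>"
    proof (rule ccontr)
      assume nz: "rho1 R r \<noteq> \<zero>"
      obtain s' where "s' \<in> S_set R w T" "s' \<otimes> rho1 R r = \<zero>"
        using kerS[OF r1c] p0 unfolding psi1_def by auto
      then show False using nzd r1c nz by blast
    qed
    obtain y where yc: "y \<in> carrier RR" and ry: "r \<oplus>\<^bsub>RR\<^esub> y = rees_t R \<otimes>\<^bsub>RR\<^esub> y"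
      using t_minus_one[OF one r r10] by blast
    have e1: "lam r \<oplus>\<^bsub>QSt\<^esub> lam y = lam (rees_t R) \<otimes>\<^bsub>QSt\<^esub> lam y"
      using la[OF r yc] lm[OF tc yc] ry by simp
    have lr: "lam r = c \<otimes>\<^bsub>QSt\<^esub> lam y"
    proof -
      have "c \<otimes>\<^bsub>QSt\<^esub> lam y = lam (rees_t R) \<otimes>\<^bsub>QSt\<^esub> lam y \<ominus>\<^bsub>QSt\<^esub> lam y"
        unfolding c_def using ltc lc[OF yc] by algebra
      also have "\<dots> = (lam r \<oplus>\<^bsub>QSt\<^esub> lam y) \<ominus>\<^bsub>QSt\<^esub> lam y" using e1 by simp
      also have "\<dots> = lam r" using lc[OF r] lc[OF yc] by algebra
      finally show ?thesis by simp
    qed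
    have ls: "lam s \<in> Units QSt" by (rule lamU[OF s])
    have ils: "inv\<^bsub>QSt\<^esub> (lam s) \<in> carrier QSt" using ls by simp
    have cs: "c \<otimes>\<^bsub>QSt\<^esub> lam s = lam s \<otimes>\<^bsub>QSt\<^esub> c"
    proof -
      have "c \<otimes>\<^bsub>QSt\<^esub> lam s = lam (rees_t R) \<otimes>\<^bsub>QSt\<^esub> lam s \<ominus>\<^bsub>QSt\<^esub> lam s"
        unfolding c_def using ltc lc[OF sc] by algebra
      also have "\<dots> = lam s \<otimes>\<^bsub>QSt\<^esub> lam (rees_t R) \<ominus>\<^bsub>QSt\<^esub> lam s" using tcomm[OF sc] by simp
      also have "\<dots> = lam s \<otimes>\<^bsub>QSt\<^esub> c" unfolding c_def using ltc lc[OF sc]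
        by (simp add: QSt.minus_eq QSt.r_distr QSt.r_minus)
      finally show ?thesis .
    qed
    have ci: "inv\<^bsub>QSt\<^esub> (lam s) \<otimes>\<^bsub>QSt\<^esub> c = c \<otimes>\<^bsub>QSt\<^esub> inv\<^bsub>QSt\<^esub> (lam s)"
      by (rule QSt.units_comm_inv[OF ls cc cs])
    have "x = (inv\<^bsub>QSt\<^esub> (lam s) \<otimes>\<^bsub>QSt\<^esub> c) \<otimes>\<^bsub>QSt\<^esub> lam y"
      unfolding xe lr using ils cc lc[OF yc] by (simp add: QSt.m_assoc)
    also have "\<dots> = c \<otimes>\<^bsub>QSt\<^esub> (inv\<^bsub>QSt\<^esub> (lam s) \<otimes>\<^bsub>QSt\<^esub> lam y)"
      unfolding ci using ils cc lc[OF yc] by (simp add: QSt.m_assoc)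
    finally show "x \<in> {c \<otimes>\<^bsub>QSt\<^esub> q | q. q \<in> carrier QSt}" using ils lc[OF yc] by blast
  qed
  have part1: "\<exists>rho1' \<in> ring_hom QSt QS.
            (\<forall>s\<in>St_set R w T. \<forall>r\<in>carrier (rees_ring R w).
               rho1' (inv\<^bsub>QSt\<^esub> (lam s) \<otimes>\<^bsub>QSt\<^esub> lam r)
                 = inv\<^bsub>QS\<^esub> (phi (rho1 R s)) \<otimes>\<^bsub>QS\<^esub> phi (rho1 R r)) \<and>
            a_kernel QSt QS rho1'
              = {(lam (rees_t R) \<ominus>\<^bsub>QSt\<^esub> \<one>\<^bsub>QSt\<^esub>) \<otimes>\<^bsub>QSt\<^esub> q | q. q \<in> carrier QSt}"
    using h1 h1v ker1 unfolding psi1_def c_def by auto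

  have a0: "alpha \<zero>\<^bsub>GR\<^esub> = \<zero>\<^bsub>QT\<^esub>"
  proof -
    have "psi2 \<zero>\<^bsub>RR\<^esub> = \<zero>\<^bsub>QT\<^esub>" by (rule hom_zero_gen[OF psi2 rQT rees_zero_closed rees_zero_add])
    moreover have "rho2 R w \<zero>\<^bsub>RR\<^esub> = \<zero>\<^bsub>GR\<^esub>"
      using rho2_zero_iff[OF rees_zero_closed] by (simp add: rees_zero Fl_zero)
    ultimately show ?thesis unfolding psi2_def by simp
  qed
  have ht: "h2 (lam (rees_t R)) = \<zero>\<^bsub>QT\<^esub>"
    using h2lam[OF tc] rho2_t a0 unfolding psi2_def by simp
  have ker2: "a_kernel QSt QT h2 = {lam (rees_t R) \<otimes>\<^bsub>QSt\<^esub> q | q. q \<in> carrier QSt}"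
  proof (intro equalityI subsetI)
    fix x assume "x \<in> {lam (rees_t R) \<otimes>\<^bsub>QSt\<^esub> q | q. q \<in> carrier QSt}"
    then obtain q where q: "q \<in> carrier QSt" and x: "x = lam (rees_t R) \<otimes>\<^bsub>QSt\<^esub> q" by blast
    have "h2 x = \<zero>\<^bsub>QT\<^esub>" unfolding x using ltc q ht by simp
    then show "x \<in> a_kernel QSt QT h2" unfolding a_kernel_def' x using ltc q by simp
  next
    fix x assume "x \<in> a_kernel QSt QT h2"
    then have xc: "x \<in> carrier QSt" and hx: "h2 x = \<zero>\<^bsub>QT\<^esub>" unfolding a_kernel_def' by auto
    obtain s r where s: "s \<in> St_set R w T" and r: "r \<in> carrier RR"
      and xe: "x = inv\<^bsub>QSt\<^esub> (lam s) \<otimes>\<^bsub>QSt\<^esub> lam r" using repSt[OF xc] by blast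
    have sc: "s \<in> carrier RR" by (rule StC[OF s])
    have u: "psi2 s \<in> Units QT" using psi2U s by blast
    have pr: "psi2 r \<in> carrier QT" by (rule ring_hom_closed[OF psi2 r])
    have "inv\<^bsub>QT\<^esub> (psi2 s) \<otimes>\<^bsub>QT\<^esub> psi2 r = \<zero>\<^bsub>QT\<^esub>" using hx h2v s r xe by simp
    then have "psi2 s \<otimes>\<^bsub>QT\<^esub> (inv\<^bsub>QT\<^esub> (psi2 s) \<otimes>\<^bsub>QT\<^esub> psi2 r) = \<zero>\<^bsub>QT\<^esub>" using u QT.Units_closed[OF u] by simp
    then have p0: "alpha (rho2 R w r) = \<zero>\<^bsub>QT\<^esub>" using QT.units_lr(1)[OF u pr] unfolding psi2_def by simp
    obtain g where gT: "g \<in> T" and g0: "g \<otimes>\<^bsub>GR\<^esub> rho2 R w r = \<zero>\<^bsub>GR\<^esub>"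
      using kerT[OF rho2_closed[OF r] p0] by blast
    obtain d where gd: "gr_homog R w g d" using homT gT by blast
    obtain s' where s'h: "rees_homog R w s' d" and s'g: "rho2 R w s' = g" using lift_homog[OF gd] by blast
    have s'c: "s' \<in> carrier RR" using s'h unfolding rees_homog_def by simp
    have s'St: "s' \<in> St_set R w T" unfolding St_set_def using s'c s'h s'g gT by blast
    define z where "z = s' \<otimes>\<^bsub>RR\<^esub> r"
    have zc: "z \<in> carrier RR" unfolding z_def by (rule rees_mult_closed[OF s'c r])
    have "rho2 R w z = \<zero>\<^bsub>GR\<^esub>" unfolding z_def using ring_hom_mult[OF rho2_hom s'c r] s'g g0 by simp
    then have zF: "\<And>n. z n \<in> Fl R w (n + 1)" using rho2_zero_iff[OF zc] by simp
    obtain y where yc: "y \<in> carrier RR" and ty: "rees_t R \<otimes>\<^bsub>RR\<^esub> y = z"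
      using shift_t[OF one zc zF] by blast
    have e1: "lam s' \<otimes>\<^bsub>QSt\<^esub> lam r = lam (rees_t R) \<otimes>\<^bsub>QSt\<^esub> lam y"
      using lm[OF s'c r] lm[OF tc yc] ty unfolding z_def by simp
    have ls': "lam s' \<in> Units QSt" by (rule lamU[OF s'St])
    have ls: "lam s \<in> Units QSt" by (rule lamU[OF s])
    have ils: "inv\<^bsub>QSt\<^esub> (lam s) \<in> carrier QSt" "inv\<^bsub>QSt\<^esub> (lam s') \<in> carrier QSt" using ls ls' by auto
    have lr: "lam r = inv\<^bsub>QSt\<^esub> (lam s') \<otimes>\<^bsub>QSt\<^esub> (lam (rees_t R) \<otimes>\<^bsub>QSt\<^esub> lam y)"
      using QSt.units_lr(2)[OF ls' lc[OF r]] e1 by simp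
    have "x = inv\<^bsub>QSt\<^esub> (lam s) \<otimes>\<^bsub>QSt\<^esub> ((inv\<^bsub>QSt\<^esub> (lam s') \<otimes>\<^bsub>QSt\<^esub> lam (rees_t R)) \<otimes>\<^bsub>QSt\<^esub> lam y)"
      unfolding xe lr using ils ltc lc[OF yc] by (simp add: QSt.m_assoc)
    also have "\<dots> = (inv\<^bsub>QSt\<^esub> (lam s) \<otimes>\<^bsub>QSt\<^esub> lam (rees_t R)) \<otimes>\<^bsub>QSt\<^esub> (inv\<^bsub>QSt\<^esub> (lam s') \<otimes>\<^bsub>QSt\<^esub> lam y)"
      unfolding tinv[OF s'St] using ils ltc lc[OF yc] by (simp add: QSt.m_assoc)
    also have "\<dots> = lam (rees_t R) \<otimes>\<^bsub>QSt\<^esub> (inv\<^bsub>QSt\<^esub> (lam s) \<otimes>\<^bsub>QSt\<^esub> (inv\<^bsub>QSt\<^esub> (lam s') \<otimes>\<^bsub>QSt\<^esub> lam y))"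
      unfolding tinv[OF s] using ils ltc lc[OF yc] by (simp add: QSt.m_assoc)
    finally show "x \<in> {lam (rees_t R) \<otimes>\<^bsub>QSt\<^esub> q | q. q \<in> carrier QSt}" using ils lc[OF yc] by blast
  qed
  have grad: "\<forall>n. h2 ` frac_deg_part QSt lam (St_set R w T) (rees_homog R w) n
                   \<subseteq> frac_deg_part QT alpha T (gr_homog R w) n"
  proof (intro allI subsetI)
    fix n y assume "y \<in> h2 ` frac_deg_part QSt lam (St_set R w T) (rees_homog R w) n"
    then obtain s r d where s: "s \<in> St_set R w T" and sd: "rees_homog R w s d" and rd: "rees_homog R w r (d + n)"
      and ye: "y = h2 (inv\<^bsub>QSt\<^esub> (lam s) \<otimes>\<^bsub>QSt\<^esub> lam r)"
      unfolding frac_deg_part_def by blast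
    have rc: "r \<in> carrier RR" using rd unfolding rees_homog_def by simp
    have "y = inv\<^bsub>QT\<^esub> (alpha (rho2 R w s)) \<otimes>\<^bsub>QT\<^esub> alpha (rho2 R w r)"
      using ye h2v s rc unfolding psi2_def by simp
    moreover have "rho2 R w s \<in> T" using s unfolding St_set_def by simp
    moreover have "gr_homog R w (rho2 R w s) d" by (rule rho2_homog[OF sd])
    moreover have "gr_homog R w (rho2 R w r) (d + n)" by (rule rho2_homog[OF rd])
    ultimately show "y \<in> frac_deg_part QT alpha T (gr_homog R w) n"
      unfolding frac_deg_part_def by blast
  qed
  have part2: "\<exists>rho2' \<in> ring_hom QSt QT.
            (\<forall>s\<in>St_set R w T. \<forall>r\<in>carrier (rees_ring R w).
               rho2' (inv\<^bsub>QSt\<^esub> (lam s) \<otimes>\<^bsub>QSt\<^esub> lam r)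
                 = inv\<^bsub>QT\<^esub> (alpha (rho2 R w s)) \<otimes>\<^bsub>QT\<^esub> alpha (rho2 R w r)) \<and>
            a_kernel QSt QT rho2'
              = {lam (rees_t R) \<otimes>\<^bsub>QSt\<^esub> q | q. q \<in> carrier QSt} \<and>
            (\<forall>n. rho2' ` frac_deg_part QSt lam (St_set R w T) (rees_homog R w) n
                   \<subseteq> frac_deg_part QT alpha T (gr_homog R w) n)"
    using h2 h2v ker2 grad unfolding psi2_def by auto
  show ?thesis using part1 part2 by blast
qed

end



theorem proposition1p3p3:
  fixes R :: "('a, 'm) ring_scheme" and w :: "'a \<Rightarrow> ereal"
    and T :: "(int \<Rightarrow> 'a set) set"
    and QT :: "('c, 'p) ring_scheme" and alpha :: "(int \<Rightarrow> 'a set) \<Rightarrow> 'c"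
    and QS :: "('b, 'n) ring_scheme" and phi :: "'a \<Rightarrow> 'b"
    and QSt :: "('d, 'q) ring_scheme" and lam :: "(int \<Rightarrow> 'a) \<Rightarrow> 'd"
  assumes "ring R"
    and "filtration R w" and "separated R w" and "zariskian R w"
    and "mult_closed (gr_ring R w) T" and "left_ore (gr_ring R w) T"
    and "\<forall>g\<in>T. \<exists>d. gr_homog R w g d"
    and "\<zero>\<^bsub>gr_ring R w\<^esub> \<notin> T"
    and "left_ring_of_fractions (gr_ring R w) T QT alpha"
    and "left_ring_of_fractions R (S_set R w T) QS phi"
    and "left_ring_of_fractions (rees_ring R w) (St_set R w T) QSt lam"
    and "\<forall>s\<in>S_set R w T. \<forall>r\<in>carrier R. r \<noteq> \<zero>\<^bsub>R\<^esub> \<longrightarrow> s \<otimes>\<^bsub>R\<^esub> r \<noteq> \<zero>\<^bsub>R\<^esub>"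
  shows "(\<exists>rho1' \<in> ring_hom QSt QS.
            (\<forall>s\<in>St_set R w T. \<forall>r\<in>carrier (rees_ring R w).
               rho1' (inv\<^bsub>QSt\<^esub> (lam s) \<otimes>\<^bsub>QSt\<^esub> lam r)
                 = inv\<^bsub>QS\<^esub> (phi (rho1 R s)) \<otimes>\<^bsub>QS\<^esub> phi (rho1 R r)) \<and>
            a_kernel QSt QS rho1'
              = {(lam (rees_t R) \<ominus>\<^bsub>QSt\<^esub> \<one>\<^bsub>QSt\<^esub>) \<otimes>\<^bsub>QSt\<^esub> q | q. q \<in> carrier QSt})
       \<and> (\<exists>rho2' \<in> ring_hom QSt QT.
            (\<forall>s\<in>St_set R w T. \<forall>r\<in>carrier (rees_ring R w).
               rho2' (inv\<^bsub>QSt\<^esub> (lam s) \<otimes>\<^bsub>QSt\<^esub> lam r)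
                 = inv\<^bsub>QT\<^esub> (alpha (rho2 R w s)) \<otimes>\<^bsub>QT\<^esub> alpha (rho2 R w r)) \<and>
            a_kernel QSt QT rho2'
              = {lam (rees_t R) \<otimes>\<^bsub>QSt\<^esub> q | q. q \<in> carrier QSt} \<and>
            (\<forall>n. rho2' ` frac_deg_part QSt lam (St_set R w T) (rees_homog R w) n
                   \<subseteq> frac_deg_part QT alpha T (gr_homog R w) n))"
proof -
  interpret filt R w by (rule filt.intro[OF assms(1)], rule filt_axioms.intro[OF assms(2)])
  show ?thesis by (rule main[OF assms(5) assms(7) assms(8) assms(9) assms(10) assms(11) assms(12)])
qed

end
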